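(* Let $k,r,h$ be positive integers such that $\ell=\frac{k+h}{r}$ is an integer. Let $m$ be the smallest integer such that $r\mid m$ and $\ell\le 2^m$. Then there exists a maximally recoverable local $(k,r,h)$-code over the field $\mathbb{F}_{2^t}$, where $t=r+m\left\lceil (h-1)\left(1-\frac{1}{2^r}\right)\right\rceil$.
   Context: For positive integers $k,r,h$ with $r\mid(k+h)$, a local $(k,r,h)$-code over a finite field $\mathbb{F}$ is a linear systematic code of dimension $k$ and length $k+h+\frac{k+h}{r}$ consisting of $k$ data symbols, $h$ heavy parity symbols (each a fixed $\mathbb{F}$-linear combination of all data symbols), and, after partitioning the $k+h$ data and heavy parity symbols into $\frac{k+h}{r}$ groups of size $r$, one local parity per group equal to the sum (XOR) of the group's symbols. A local group is such a group together with its local parity. The code is maximally recoverable if for every set $E$ of coordinates containing exactly one coordinate from each local group, puncturing the code in $E$ (deleting those coordinates) yields a maximum distance separable $[k+h,k]$ code (minimum distance $h+1$). *)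

theory Defs
  imports Complex_Main
begin

text \<open>Coordinates of a local (k,r,h)-code: 0..<k data symbols, k..<k+h heavy parities,
  k+h..<k+h+(k+h)/r local parities (local parity of group g at k+h+g).
  P j i (j<h, i<k) is the coefficient of data symbol i in heavy parity j.
  grp i (i<k+h) is the group of symbol i.\<close>

definition messages :: "nat \<Rightarrow> (nat \<Rightarrow> 'a::field) set" where
  "messages k = {x. \<forall>i. k \<le> i \<longrightarrow> x i = 0}"

definition num_groups :: "nat \<Rightarrow> nat \<Rightarrow> nat \<Rightarrow> nat" where
  "num_groups k r h = (k + h) div r"

definition code_length :: "nat \<Rightarrow> nat \<Rightarrow> nat \<Rightarrow> nat" where
  "code_length k r h = k + h + num_groups k r h"

definition sym_val :: "nat \<Rightarrow> (nat \<Rightarrow> nat \<Rightarrow> 'a::field) \<Rightarrow> (nat \<Rightarrow> 'a) \<Rightarrow> nat \<Rightarrow> 'a" where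
  "sym_val k P x i = (if i < k then x i else (\<Sum>j<k. P (i - k) j * x j))"

definition group_members :: "nat \<Rightarrow> nat \<Rightarrow> (nat \<Rightarrow> nat) \<Rightarrow> nat \<Rightarrow> nat set" where
  "group_members k h grp g = {i. i < k + h \<and> grp i = g}"

definition encode :: "nat \<Rightarrow> nat \<Rightarrow> nat \<Rightarrow> (nat \<Rightarrow> nat \<Rightarrow> 'a::field) \<Rightarrow> (nat \<Rightarrow> nat)
    \<Rightarrow> (nat \<Rightarrow> 'a) \<Rightarrow> nat \<Rightarrow> 'a" where
  "encode k r h P grp x i =
     (if i < k + h then sym_val k P x i
      else if i < code_length k r h then
        (\<Sum>j\<in>group_members k h grp (i - (k + h)). sym_val k P x j)
      else 0)"

definition local_group :: "nat \<Rightarrow> nat \<Rightarrow> (nat \<Rightarrow> nat) \<Rightarrow> nat \<Rightarrow> nat set" where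
  "local_group k h grp g = group_members k h grp g \<union> {k + h + g}"

definition valid_partition :: "nat \<Rightarrow> nat \<Rightarrow> nat \<Rightarrow> (nat \<Rightarrow> nat) \<Rightarrow> bool" where
  "valid_partition k r h grp \<longleftrightarrow>
     (\<forall>i < k + h. grp i < num_groups k r h) \<and>
     (\<forall>g < num_groups k r h. card (group_members k h grp g) = r)"

definition punct_weight :: "nat \<Rightarrow> nat set \<Rightarrow> (nat \<Rightarrow> 'a::zero) \<Rightarrow> nat" where
  "punct_weight n E c = card {i. i < n \<and> i \<notin> E \<and> c i \<noteq> 0}"

text \<open>The code punctured in E is an MDS [k+h,k] code: it has dimension k (puncturing is
  injective on the code, equivalently on messages since the code is systematic) and
  minimum distance h+1.\<close>
definition punctured_MDS :: "nat \<Rightarrow> nat \<Rightarrow> nat \<Rightarrow> (nat \<Rightarrow> nat \<Rightarrow> 'a::field) \<Rightarrow> (nat \<Rightarrow> nat)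
    \<Rightarrow> nat set \<Rightarrow> bool" where
  "punctured_MDS k r h P grp E \<longleftrightarrow>
     (\<forall>x\<in>messages k. (\<forall>i. i < code_length k r h \<and> i \<notin> E \<longrightarrow> encode k r h P grp x i = 0)
         \<longrightarrow> x = (\<lambda>_. 0)) \<and>
     Min {punct_weight (code_length k r h) E (encode k r h P grp x) | x.
            x \<in> messages k \<and> x \<noteq> (\<lambda>_. 0)} = h + 1"

definition max_recoverable_local_code :: "nat \<Rightarrow> nat \<Rightarrow> nat \<Rightarrow> (nat \<Rightarrow> nat \<Rightarrow> 'a::field)
    \<Rightarrow> (nat \<Rightarrow> nat) \<Rightarrow> bool" where
  "max_recoverable_local_code k r h P grp \<longleftrightarrow>
     valid_partition k r h grp \<and>
     (\<forall>E. E \<subseteq> {..<code_length k r h} \<and>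
          (\<forall>g < num_groups k r h. card (E \<inter> local_group k h grp g) = 1)
          \<longrightarrow> punctured_MDS k r h P grp E)"

definition m_param :: "nat \<Rightarrow> nat \<Rightarrow> nat \<Rightarrow> nat" where
  "m_param k r h = (LEAST m. r dvd m \<and> num_groups k r h \<le> 2 ^ m)"

definition t_param :: "nat \<Rightarrow> nat \<Rightarrow> nat \<Rightarrow> nat" where
  "t_param k r h = r + m_param k r h *
      nat \<lceil>(real h - 1) * (1 - 1 / 2 ^ r)\<rceil>"

end

theory Submission
  imports Defs "HOL-Algebra.Algebraic_Closure_Type" "HOL-Library.Z2"
begin


section \<open>Characteristic 2 arithmetic\<close>

context
  fixes dummy :: "'a::comm_ring_1"
  assumes c2: "(1::'a) + 1 = 0"
begin

lemma c2_add_self: "(x::'a) + x = 0"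
proof -
  have "x + x = (1 + 1) * x" by (simp add: algebra_simps)
  thus ?thesis using c2 by simp
qed

lemma c2_minus: "- (x::'a) = x"
  using c2_add_self[of x] by (simp add: add_eq_0_iff)

lemma c2_diff: "(x::'a) - y = x + y"
  using c2_minus[of y] by (metis diff_conv_add_uminus)

lemma c2_sq: "((x::'a) + y)^2 = x^2 + y^2"
proof -
  have "(x+y)^2 = x^2 + y^2 + (1+1)*x*y" by (simp add: power2_sum algebra_simps)
  thus ?thesis using c2 by simp
qed

lemma c2_frob: "((x::'a) + y)^(2^e) = x^(2^e) + y^(2^e)"
proof (induction e)
  case 0 then show ?case by simp
next
  case (Suc e)
  have "(x+y)^(2^Suc e) = ((x+y)^(2^e))^2" by (simp add: power_mult[symmetric] mult.commute)
  also have "\<dots> = (x^(2^e))^2 + (y^(2^e))^2" using Suc c2_sq by simp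
  also have "\<dots> = x^(2^Suc e) + y^(2^Suc e)" by (simp add: power_mult[symmetric] mult.commute)
  finally show ?case .
qed

lemma c2_frob_sum: "(\<Sum>i\<in>A. (f i::'a))^(2^e) = (\<Sum>i\<in>A. f i ^ (2^e))"
proof (induction A rule: infinite_finite_induct)
  case (infinite A)
  have "(0::'a)^(2^e) = 0" by (rule zero_power) simp
  then show ?case using infinite by simp
next
  case empty
  have "(0::'a)^(2^e) = 0" by (rule zero_power) simp
  then show ?case by simp
next
  case (insert x F) then show ?case by (simp add: c2_frob)
qed

lemma c2_of_nat: "of_nat n * (x::'a) = (if even n then 0 else x)"
proof (induction n)
  case 0 then show ?case by simp
next
  case (Suc n) then show ?case by (auto simp: algebra_simps c2_add_self)
qed

lemma c2_sum_Un_diff: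
  assumes "finite A" "finite B"
  shows "sum (f::_\<Rightarrow>'a) ((A - B) \<union> (B - A)) = sum f A + sum f B"
proof -
  have dA: "sum f A = sum f (A - B) + sum f (A \<inter> B)"
    using sum.Int_Diff[OF assms(1), of f B] by (simp add: add.commute)
  have dB: "sum f B = sum f (B - A) + sum f (A \<inter> B)"
    using sum.Int_Diff[OF assms(2), of f A] by (simp add: add.commute Int_commute)
  have "sum f ((A - B) \<union> (B - A)) = sum f (A - B) + sum f (B - A)"
    using assms by (intro sum.union_disjoint) auto
  also have "\<dots> = sum f A + sum f B"
    using dA dB c2_add_self[of "sum f (A \<inter> B)"] by (simp add: algebra_simps)
  finally show ?thesis .
qed

end

definition indep2 :: "('i \<Rightarrow> 'a::comm_ring_1) \<Rightarrow> 'i set \<Rightarrow> bool" where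
  "indep2 d S \<longleftrightarrow> (\<forall>U. U \<subseteq> S \<longrightarrow> U \<noteq> {} \<longrightarrow> sum d U \<noteq> 0)"

lemma indep2_subset: "indep2 d S \<Longrightarrow> T \<subseteq> S \<Longrightarrow> indep2 d T"
  unfolding indep2_def by blast

section \<open>Moore lemma\<close>

lemma moore:
  fixes \<delta> c :: "'i \<Rightarrow> 'a::field"
  assumes c2: "(1::'a) + 1 = 0"
    and "finite S" "card S \<le> n" "indep2 \<delta> S"
    and "\<forall>e<n. (\<Sum>u\<in>S. c u * \<delta> u ^ (2^e)) = 0"
  shows "\<forall>u\<in>S. c u = 0"
  using assms(2-)
proof (induction S arbitrary: n c \<delta> rule: finite_induct)
  case empty then show ?case by simp
next
  case (insert v S)
  obtain n' where n: "n = Suc n'" using insert(1,2,4) by (cases n) auto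
  define \<epsilon> where "\<epsilon> u = \<delta> u ^ 2 + \<delta> v * \<delta> u" for u
  have dS: "indep2 \<delta> S" using insert(5) by (rule indep2_subset) auto
  have ind: "indep2 \<epsilon> S"
    unfolding indep2_def
  proof (intro allI impI)
    fix U assume U: "U \<subseteq> S" "U \<noteq> {}"
    have fU: "finite U" using U insert(1) finite_subset by blast
    define D where "D = sum \<delta> U"
    have "sum \<epsilon> U = (\<Sum>u\<in>U. \<delta> u ^ 2) + \<delta> v * D"
      by (simp add: \<epsilon>_def D_def sum.distrib sum_distrib_left)
    also have "(\<Sum>u\<in>U. \<delta> u ^ 2) = D ^ 2"
      using c2_frob_sum[OF c2, of \<delta> U 1] by (simp add: D_def)
    finally have e: "sum \<epsilon> U = D * (D + \<delta> v)" by (simp add: algebra_simps power2_eq_square)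
    have D0: "D \<noteq> 0" using dS U by (auto simp: indep2_def D_def)
    have "v \<notin> U" using U insert(2) by auto
    hence eqD: "D + \<delta> v = sum \<delta> (insert v U)"
      using fU by (simp add: D_def add.commute)
    have "sum \<delta> (insert v U) \<noteq> 0"
      using insert(5) U unfolding indep2_def by (metis insert_mono insert_not_empty)
    hence "D + \<delta> v \<noteq> 0" using eqD by simp
    with D0 show "sum \<epsilon> U \<noteq> 0" using e by simp
  qed
  have eqs: "(\<Sum>u\<in>S. c u * \<delta> u ^ (2^e)) = c v * \<delta> v ^ (2^e)" if "e < n" for e
  proof -
    have "c v * \<delta> v ^ (2^e) + (\<Sum>u\<in>S. c u * \<delta> u ^ (2^e)) = 0"
      using insert(6) that insert(1,2) by simp
    thus ?thesis using c2_minus[OF c2] by (metis add_eq_0_iff)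
  qed
  have "\<forall>e<n'. (\<Sum>u\<in>S. c u * \<epsilon> u ^ (2^e)) = 0"
  proof (intro allI impI)
    fix e assume e: "e < n'"
    have pw: "\<epsilon> u ^ (2^e) = \<delta> u ^ (2^Suc e) + \<delta> v ^ (2^e) * \<delta> u ^ (2^e)" for u
      unfolding \<epsilon>_def c2_frob[OF c2]
      by (simp add: power_mult[symmetric] power_mult_distrib mult.commute)
    have "(\<Sum>u\<in>S. c u * \<epsilon> u ^ (2^e)) =
        (\<Sum>u\<in>S. c u * \<delta> u ^ (2^Suc e)) + \<delta> v ^ (2^e) * (\<Sum>u\<in>S. c u * \<delta> u ^ (2^e))"
      by (simp add: pw sum.distrib sum_distrib_left algebra_simps)
    also have "\<dots> = c v * \<delta> v ^ (2^Suc e) + \<delta> v ^ (2^e) * (c v * \<delta> v ^ (2^e))"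
      using eqs[of e] eqs[of "Suc e"] e n by simp
    also have "\<dots> = 0"
    proof -
      have "\<delta> v ^ (2^Suc e) = \<delta> v ^ (2^e) * \<delta> v ^ (2^e)"
        by (simp add: power_add[symmetric] mult_2)
      thus ?thesis using c2_add_self[OF c2, of "c v * \<delta> v ^ (2^e) * \<delta> v ^ (2^e)"]
        by (simp add: algebra_simps)
    qed
    finally show "(\<Sum>u\<in>S. c u * \<epsilon> u ^ (2^e)) = 0" .
  qed
  moreover have "card S \<le> n'" using insert(1,2,4) n by simp
  ultimately have cS: "\<forall>u\<in>S. c u = 0" using insert.IH ind by blast
  have "c v * \<delta> v = 0" using eqs[of 0] n cS by simp
  moreover have "sum \<delta> {v} \<noteq> 0" using insert(5) unfolding indep2_def by blast
  hence "\<delta> v \<noteq> 0" by simp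
  ultimately have "c v = 0" by simp
  with cS show ?case by simp
qed

section \<open>Vandermonde\<close>

lemma vandermonde:
  fixes \<gamma> \<alpha> :: "'i \<Rightarrow> 'a::field"
  assumes "finite G" "inj_on \<alpha> G" "card G \<le> n"
    and "\<forall>e<n. (\<Sum>g\<in>G. \<gamma> g * \<alpha> g ^ e) = 0"
  shows "\<forall>g\<in>G. \<gamma> g = 0"
  using assms
proof (induction G arbitrary: n \<gamma> rule: finite_induct)
  case empty then show ?case by simp
next
  case (insert v S)
  obtain n' where n: "n = Suc n'" using insert(1,2,5) by (cases n) auto
  have eqs: "(\<Sum>u\<in>S. \<gamma> u * \<alpha> u ^ e) = - (\<gamma> v * \<alpha> v ^ e)" if "e < n" for e
  proof -
    have "\<gamma> v * \<alpha> v ^ e + (\<Sum>u\<in>S. \<gamma> u * \<alpha> u ^ e) = 0"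
      using insert(6) that insert(1,2) by simp
    thus ?thesis by (simp add: eq_neg_iff_add_eq_0 add.commute)
  qed
  define \<gamma>' where "\<gamma>' u = \<gamma> u * (\<alpha> u - \<alpha> v)" for u
  have "\<forall>e<n'. (\<Sum>u\<in>S. \<gamma>' u * \<alpha> u ^ e) = 0"
  proof (intro allI impI)
    fix e assume e: "e < n'"
    have "(\<Sum>u\<in>S. \<gamma>' u * \<alpha> u ^ e) = (\<Sum>u\<in>S. \<gamma> u * \<alpha> u ^ Suc e) - \<alpha> v * (\<Sum>u\<in>S. \<gamma> u * \<alpha> u ^ e)"
      by (simp add: \<gamma>'_def sum_subtractf sum_distrib_left algebra_simps)
    also have "\<dots> = 0" using eqs[of e] eqs[of "Suc e"] e n by (simp add: algebra_simps)
    finally show "(\<Sum>u\<in>S. \<gamma>' u * \<alpha> u ^ e) = 0" .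
  qed
  moreover have "inj_on \<alpha> S" using insert(4) by auto
  moreover have "card S \<le> n'" using insert(1,2,5) n by simp
  ultimately have "\<forall>u\<in>S. \<gamma>' u = 0" using insert.IH by blast
  moreover have "\<alpha> u \<noteq> \<alpha> v" if "u \<in> S" for u using insert(2,4) that by (auto simp: inj_on_def)
  ultimately have cS: "\<forall>u\<in>S. \<gamma> u = 0" by (auto simp: \<gamma>'_def)
  have "\<gamma> v = 0" using eqs[of 0] n cS by simp
  with cS show ?case by simp
qed


lemma sum_in_closed:
  assumes "finite U" "\<forall>i\<in>U. B i \<in> V" "0 \<in> V" "\<forall>x\<in>V. \<forall>y\<in>V. x + y \<in> V"
  shows "sum B U \<in> V"
  using assms by (induction U rule: finite_induct) auto

lemma greedy_indep:
  fixes V :: "'a::comm_ring_1 set"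
  assumes c2: "(1::'a) + 1 = 0" and fin: "finite V" and cardV: "2^d \<le> card V"
  shows "\<exists>B::nat\<Rightarrow>'a. (\<forall>i<d. B i \<in> V) \<and> indep2 B {..<d}"
  using cardV
proof (induction d)
  case 0 then show ?case by (auto simp: indep2_def)
next
  case (Suc d)
  then obtain B where B: "\<forall>i<d. B i \<in> V" "indep2 B {..<d}" by force
  define sp where "sp = (\<lambda>U. sum B U) ` Pow {..<d}"
  have "card sp \<le> card (Pow {..<d})" unfolding sp_def by (rule card_image_le) simp
  also have "\<dots> = 2^d" by (simp add: card_Pow)
  also have "\<dots> < card V"
  proof -
    have p: "(0::nat) < 2^d" by simp
    have "2 * 2^d \<le> card V" using Suc.prems by simp
    with p show ?thesis by linarith
  qed
  moreover have "finite sp" unfolding sp_def by simp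
  ultimately have "\<not> V \<subseteq> sp" using card_mono[of sp V] by linarith
  then obtain v where v: "v \<in> V" "v \<notin> sp" by blast
  define B' where "B' = B(d := v)"
  have "indep2 B' {..<Suc d}"
    unfolding indep2_def
  proof (intro allI impI)
    fix U assume U: "U \<subseteq> {..<Suc d}" "U \<noteq> {}"
    have fU: "finite U" using U finite_subset by blast
    show "sum B' U \<noteq> 0"
    proof (cases "d \<in> U")
      case False
      hence "U \<subseteq> {..<d}" using U by (auto simp: less_Suc_eq)
      moreover have "sum B' U = sum B U" using False by (intro sum.cong) (auto simp: B'_def)
      ultimately show ?thesis using B(2) U by (auto simp: indep2_def)
    next
      case True
      have sub: "U - {d} \<subseteq> {..<d}" using U by auto
      have "sum B' U = v + sum B' (U - {d})" using True fU by (simp add: B'_def sum.remove)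
      also have "sum B' (U - {d}) = sum B (U - {d})" by (intro sum.cong) (auto simp: B'_def)
      finally have e: "sum B' U = v + sum B (U - {d})" .
      show ?thesis
      proof
        assume "sum B' U = 0"
        hence "v = - sum B (U - {d})" using e by (simp add: eq_neg_iff_add_eq_0)
        hence "v = sum B (U - {d})" using c2_minus[OF c2] by simp
        hence "v \<in> sp" using sub unfolding sp_def by blast
        with v show False by simp
      qed
    qed
  qed
  moreover have "\<forall>i<Suc d. B' i \<in> V" using B v by (auto simp: B'_def)
  ultimately show ?case by blast
qed

lemma indep2_unique:
  fixes B :: "'i \<Rightarrow> 'a::comm_ring_1"
  assumes c2: "(1::'a) + 1 = 0" and "indep2 B D" "finite D" "U \<subseteq> D" "U' \<subseteq> D" "sum B U = sum B U'"
  shows "U = U'"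
proof (rule ccontr)
  assume ne: "U \<noteq> U'"
  have f: "finite U" "finite U'" using assms finite_subset by blast+
  define XX where "XX = (U - U') \<union> (U' - U)"
  have "sum B XX = sum B U + sum B U'" unfolding XX_def by (rule c2_sum_Un_diff[OF c2 f])
  also have "\<dots> = 0" using assms(6) c2_add_self[OF c2] by simp
  finally have s0: "sum B XX = 0" .
  have XD: "XX \<subseteq> D" using assms(4,5) by (auto simp: XX_def)
  have Xne: "XX \<noteq> {}"
  proof
    assume "XX = {}"
    hence "U - U' = {}" "U' - U = {}" unfolding XX_def by (simp_all only: Un_empty)
    hence "U \<subseteq> U'" "U' \<subseteq> U" by (simp_all only: Diff_eq_empty_iff)
    hence "U = U'" by (rule subset_antisym)
    with ne show False by contradiction
  qed
  have "sum B XX \<noteq> 0" using assms(2) XD Xne unfolding indep2_def by simp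
  with s0 show False by contradiction
qed

lemma span_all:
  fixes B :: "nat \<Rightarrow> 'a::comm_ring_1"
  assumes c2: "(1::'a) + 1 = 0" and fin: "finite V" and cV: "card V = 2^d"
    and BV: "\<forall>i<d. B i \<in> V" and ind: "indep2 B {..<d}"
    and z: "0 \<in> V" and cl: "\<forall>x\<in>V. \<forall>y\<in>V. x + y \<in> V"
    and y: "y \<in> V"
  shows "\<exists>U\<subseteq>{..<d}. sum B U = y"
proof -
  define sp where "sp = (\<lambda>U. sum B U) ` Pow {..<d}"
  have inj: "inj_on (\<lambda>U. sum B U) (Pow {..<d})"
    by (rule inj_onI) (use indep2_unique[OF c2 ind] in auto)
  have "card sp = 2^d" unfolding sp_def using card_image[OF inj] by (simp add: card_Pow)
  moreover have "sp \<subseteq> V" unfolding sp_def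
  proof
    fix x assume "x \<in> (\<lambda>U. sum B U) ` Pow {..<d}"
    then obtain U where "U \<subseteq> {..<d}" "x = sum B U" by auto
    moreover have "finite U" "\<forall>i\<in>U. B i \<in> V" using BV \<open>U \<subseteq> {..<d}\<close> finite_subset by auto
    ultimately show "x \<in> V" using sum_in_closed[of U B V] z cl by auto
  qed
  ultimately have "sp = V" using fin cV by (metis card_subset_eq)
  thus ?thesis using y unfolding sp_def by auto
qed

section \<open>Characteristic of a field with 2^t elements\<close>

lemma invol_even:
  assumes "finite A" "\<forall>x\<in>A. f x \<in> A \<and> f (f x) = x \<and> f x \<noteq> x"
  shows "even (card A)"
  using assms
proof (induction "card A" arbitrary: A rule: less_induct)
  case less
  show ?case
  proof (cases "A = {}")
    case True then show ?thesis by simp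
  next
    case False
    then obtain x where x: "x \<in> A" by blast
    define A' where "A' = A - {x, f x}"
    have fx: "f x \<in> A" "f x \<noteq> x" using less.prems x by auto
    have cA: "card A = card A' + 2"
    proof -
      have "card A' = card A - card {x, f x}" unfolding A'_def using x fx less.prems(1)
        by (intro card_Diff_subset) auto
      moreover have "card {x, f x} = 2" using fx by simp
      moreover have "card {x, f x} \<le> card A" using x fx less.prems(1) by (intro card_mono) auto
      ultimately show ?thesis by simp
    qed
    have "even (card A')"
    proof (rule less.hyps)
      show "card A' < card A" using cA by simp
      show "finite A'" using less.prems(1) by (simp add: A'_def)
      show "\<forall>y\<in>A'. f y \<in> A' \<and> f (f y) = y \<and> f y \<noteq> y"
      proof
        fix y assume y: "y \<in> A'"
        hence yA: "y \<in> A" "y \<noteq> x" "y \<noteq> f x" by (auto simp: A'_def)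
        have P: "f y \<in> A" "f (f y) = y" "f y \<noteq> y" using less.prems(2) yA(1) by auto
        have fxx: "f (f x) = x" using less.prems(2) x by auto
        have "f y \<noteq> x" using P(2) yA(3) by auto
        moreover have "f y \<noteq> f x"
        proof
          assume "f y = f x"
          hence "f (f y) = f (f x)" by simp
          thus False using P(2) fxx yA(2) by simp
        qed
        ultimately show "f y \<in> A' \<and> f (f y) = y \<and> f y \<noteq> y" using P by (simp add: A'_def)
      qed
    qed
    thus ?thesis using cA by simp
  qed
qed

lemma card_pow2_char2:
  assumes "card (UNIV :: 'a::field set) = 2^t" "0 < t"
  shows "(1::'a) + 1 = 0"
proof (rule ccontr)
  assume ne: "(1::'a) + 1 \<noteq> 0"
  have fin: "finite (UNIV :: 'a set)" using assms by (metis card.infinite power_not_zero zero_neq_numeral)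
  have "even (card (UNIV - {0::'a}))"
  proof (rule invol_even[of _ uminus])
    show "finite (UNIV - {0::'a})" using fin by simp
    show "\<forall>x\<in>UNIV - {0::'a}. - x \<in> UNIV - {0} \<and> - (- x) = x \<and> - x \<noteq> x"
    proof (intro ballI conjI)
      fix x :: 'a assume x: "x \<in> UNIV - {0}"
      show "- x \<in> UNIV - {0}" using x by simp
      show "- (- x) = x" by simp
      show "- x \<noteq> x"
      proof
        assume "- x = x"
        hence "(1 + 1) * x = 0" by (simp add: algebra_simps)
        thus False using ne x by simp
      qed
    qed
  qed
  moreover have "card (UNIV - {0::'a}) = 2^t - 1" using fin assms(1) by (simp add: card_Diff_singleton)
  ultimately show False using assms(2) by (simp add: odd_pos)
qed

section \<open>Roots of X^(2^m) - X in the algebraic closure of F2\<close>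

type_synonym C = "bit alg_closure"

lemma c2C: "(1::C) + 1 = 0"
proof -
  have "(1::bit) + 1 = 0" by simp
  hence "to_ac ((1::bit) + 1) = (0::C)" by (simp only: to_ac_0)
  thus ?thesis by (simp only: to_ac_add to_ac_1)
qed

lemma size_card_mset: "\<forall>a. count M a \<le> 1 \<Longrightarrow> size M = card (set_mset M)"
proof (induction M)
  case empty then show ?case by simp
next
  case (add x M)
  have "count M x = 0" using add.prems[rule_format, of x] by simp
  hence "x \<notin># M" by (simp add: count_eq_zero_iff)
  moreover have "\<forall>a. count M a \<le> 1"
  proof
    fix a
    have "count M a \<le> count (add_mset x M) a" by simp
    thus "count M a \<le> 1" using add.prems by (meson le_trans)
  qed
  ultimately show ?case using add.IH by simp
qed

lemma alg_closed_size_proots: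
  fixes p :: "'b::alg_closed_field poly"
  assumes "p \<noteq> 0"
  shows "size (proots p) = degree p"
proof -
  obtain A where A: "size A = degree p" "p = smult (lead_coeff p) (\<Prod>x\<in>#A. [:-x, 1:])"
    using alg_closed_imp_factorization[OF assms] by blast
  have "proots p = proots (\<Prod>x\<in>#A. [:-x, 1:])" using assms by (subst A(2)) simp
  also have "(\<Prod>x\<in>#A. [:-x, 1:]) = (\<Prod>q\<in>#image_mset (\<lambda>x. [:-x,1:]) A. q)" by simp
  also have "proots \<dots> = (\<Sum>q\<in>#image_mset (\<lambda>x. [:-x,1:]) A. proots q)"
    by (rule proots_prod_mset) auto
  also have "\<dots> = (\<Sum>x\<in>#A. {#x#})" by (simp add: multiset.map_comp o_def)
  also have "\<dots> = A" by (induction A) auto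
  finally show ?thesis using A(1) by simp
qed

definition Kset :: "nat \<Rightarrow> C set" where "Kset m = {x. x ^ (2^m) = x}"

lemma card_Kset:
  assumes "0 < m"
  shows "finite (Kset m) \<and> card (Kset m) = 2^m"
proof -
  define N :: nat where "N = 2^m"
  have "2^1 \<le> (2::nat)^m" using assms by (intro power_increasing) auto
  hence N2: "2 \<le> N" by (simp add: N_def)
  define p :: "C poly" where "p = [:0,1:]^N - [:0,1:]"
  have pe: "poly p x = x^N - x" for x by (simp add: p_def)
  have dp: "degree p = N"
  proof -
    have "degree ([:0,1:]^N :: C poly) = N" by (simp add: degree_power_eq)
    moreover have "degree ([:0,1:] :: C poly) < N" using N2 by simp
    ultimately show ?thesis unfolding p_def diff_conv_add_uminus by (subst degree_add_eq_left) auto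
  qed
  hence p0: "p \<noteq> 0" using N2 by auto
  have evN: "even N" using assms by (simp add: N_def)
  have "of_nat N = (0::C)"
    using c2_of_nat[OF c2C, of N 1] evN by simp
  hence dd: "poly (pderiv p) x = -1" for x
    by (simp add: p_def pderiv_diff pderiv_power pderiv_pCons)
  have cnt: "\<forall>a. count (proots p) a \<le> 1"
  proof
    fix a
    show "count (proots p) a \<le> 1"
    proof (rule ccontr)
      assume "\<not> count (proots p) a \<le> 1"
      hence "2 \<le> order a p" using p0 by simp
      hence "[:-a,1:]^2 dvd p" using order_1[of a p] power_le_dvd by blast
      then obtain q where q: "p = [:-a,1:]^2 * q" by (elim dvdE)
      have "poly (pderiv p) a = 0" by (subst q) (simp add: pderiv_mult pderiv_power)
      thus False using dd[of a] by simp
    qed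
  qed
  have "card (set_mset (proots p)) = N"
    using size_card_mset[OF cnt] alg_closed_size_proots[OF p0] dp by simp
  moreover have "set_mset (proots p) = Kset m"
    using p0 by (auto simp: Kset_def pe N_def)
  moreover have "finite (set_mset (proots p))" by simp
  ultimately show ?thesis by (simp add: N_def)
qed

lemma Kset_add: "x \<in> Kset m \<Longrightarrow> y \<in> Kset m \<Longrightarrow> x + y \<in> Kset m"
  by (simp add: Kset_def c2_frob[OF c2C])

lemma Kset_mult: "x \<in> Kset m \<Longrightarrow> y \<in> Kset m \<Longrightarrow> x * y \<in> Kset m"
  by (simp add: Kset_def power_mult_distrib)

lemma Kset_0: "0 \<in> Kset m" by (simp add: Kset_def)

lemma Kset_1: "1 \<in> Kset m" by (simp add: Kset_def)

lemma Kset_power: "x \<in> Kset m \<Longrightarrow> x ^ n \<in> Kset m"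
  by (induction n) (auto simp: Kset_1 Kset_mult)

lemma Kset_sub:
  assumes "r dvd m"
  shows "Kset r \<subseteq> Kset m"
proof
  fix x assume x: "x \<in> Kset r"
  obtain j where m: "m = r * j" using assms by blast
  have "x ^ (2^(r*j)) = x"
  proof (induction j)
    case 0 then show ?case by simp
  next
    case (Suc j)
    have "x ^ (2^(r * Suc j)) = (x ^ (2^(r*j))) ^ (2^r)"
      by (simp add: power_mult[symmetric] power_add mult.commute)
    also have "\<dots> = x" using Suc x by (simp add: Kset_def)
    finally show ?case .
  qed
  thus "x \<in> Kset m" using m by (simp add: Kset_def)
qed



lemma zero_pow2 [simp]: "(0::'a::semiring_1) ^ (2^s) = 0"
  by (rule zero_power) simp

section \<open>Reduction: codes from a "difference-independent" labelling\<close>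

definition Gof :: "nat \<Rightarrow> nat \<Rightarrow> nat \<Rightarrow> nat \<Rightarrow> nat" where
  "Gof k h r u = (if u < k + h then u div r else u - (k + h))"

definition lamf :: "nat \<Rightarrow> nat \<Rightarrow> (nat \<Rightarrow> 'a) \<Rightarrow> nat \<Rightarrow> 'a::zero" where
  "lamf k h \<mu> u = (if u < k + h then \<mu> u else 0)"

definition MUprop :: "nat \<Rightarrow> nat \<Rightarrow> nat \<Rightarrow> (nat \<Rightarrow> 'a::comm_ring_1) \<Rightarrow> bool" where
  "MUprop k r h \<mu> \<longleftrightarrow> (\<forall>e S. (\<forall>g<num_groups k r h. e g < code_length k r h \<and> Gof k h r (e g) = g)
     \<longrightarrow> S \<subseteq> {..<code_length k r h} \<longrightarrow> S \<noteq> {} \<longrightarrow> card S \<le> h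
     \<longrightarrow> (\<forall>u\<in>S. u \<noteq> e (Gof k h r u))
     \<longrightarrow> (\<Sum>u\<in>S. lamf k h \<mu> u + lamf k h \<mu> (e (Gof k h r u))) \<noteq> 0)"

lemma split_sum: "(\<Sum>u<k+h. f u) = (\<Sum>u<k. f u) + (\<Sum>d<h. (f (k+d)::'a::comm_monoid_add))"
  for k h :: nat
  by (induction h) (auto simp: add.assoc)

lemma div_eq_iff_range:
  assumes "0 < (r::nat)"
  shows "i div r = g \<longleftrightarrow> g * r \<le> i \<and> i < g * r + r"
proof
  assume "i div r = g"
  thus "g * r \<le> i \<and> i < g * r + r" using assms
    by (metis add.commute div_times_less_eq_dividend dividend_less_div_times mult.commute)
next
  assume "g * r \<le> i \<and> i < g * r + r"
  thus "i div r = g" using assms by (metis add.commute div_nat_eqI mult.commute mult_Suc_right)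
qed

lemma encode_diff:
  fixes P :: "nat \<Rightarrow> nat \<Rightarrow> 'a::field"
  shows "encode k r h P grp (\<lambda>i. x i - y i) u = encode k r h P grp x u - encode k r h P grp y u"
proof -
  have sv: "sym_val k P (\<lambda>i. x i - y i) j = sym_val k P x j - sym_val k P y j" for j
    by (simp add: sym_val_def sum_subtractf right_diff_distrib)
  show ?thesis by (simp add: encode_def sv sum_subtractf)
qed

lemma finite_D:
  "finite {y::nat \<Rightarrow> 'a::{finite,zero}. \<forall>d\<ge>n. y d = 0}"
proof -
  have "{y::nat \<Rightarrow> 'a. \<forall>d\<ge>n. y d = 0} \<subseteq> (\<lambda>f d. if d < n then f d else 0) ` (Pi\<^sub>E {..<n} (\<lambda>_. UNIV))"
  proof
    fix y :: "nat \<Rightarrow> 'a" assume y: "y \<in> {y. \<forall>d\<ge>n. y d = 0}"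
    have "y = (\<lambda>d. if d < n then restrict y {..<n} d else 0)" using y by (auto simp: fun_eq_iff)
    moreover have "restrict y {..<n} \<in> Pi\<^sub>E {..<n} (\<lambda>_. UNIV)" by simp
    ultimately show "y \<in> (\<lambda>f d. if d < n then f d else 0) ` (Pi\<^sub>E {..<n} (\<lambda>_. UNIV))" by blast
  qed
  moreover have "finite (Pi\<^sub>E {..<n} (\<lambda>_. UNIV :: 'a set))" by (intro finite_PiE) auto
  ultimately show ?thesis by (meson finite_imageI finite_subset)
qed

context
  fixes k r h :: nat
  assumes r0: "0 < r" and rd: "r dvd (k + h)"
begin

lemma ell_mult: "num_groups k r h * r = k + h"
  using rd by (simp add: num_groups_def)

lemma Gof_lt: "u < code_length k r h \<Longrightarrow> Gof k h r u < num_groups k r h"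
proof -
  assume u: "u < code_length k r h"
  show ?thesis
  proof (cases "u < k + h")
    case True
    then show ?thesis using ell_mult r0
      by (simp add: Gof_def) (metis div_less_iff_less_mult)
  next
    case False
    then show ?thesis using u by (simp add: Gof_def code_length_def)
  qed
qed

lemma gm_eq: "group_members k h (\<lambda>i. i div r) g = {i. i < k + h \<and> i div r = g}"
  by (simp add: group_members_def)

lemma lg_eq:
  assumes "g < num_groups k r h"
  shows "local_group k h (\<lambda>i. i div r) g = {u. u < code_length k r h \<and> Gof k h r u = g}"
  using assms by (auto simp: local_group_def group_members_def Gof_def code_length_def)

lemma gm_card:
  assumes "g < num_groups k r h"
  shows "card (group_members k h (\<lambda>i. i div r) g) = r"
proof -
  have le: "g * r + r \<le> k + h" using assms ell_mult
    by (metis add.commute mult_Suc Suc_leI mult_le_mono1)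
  have "group_members k h (\<lambda>i. i div r) g = {g*r..<g*r+r}"
    using le by (auto simp: gm_eq div_eq_iff_range[OF r0])
  thus ?thesis by simp
qed

lemma valid_part: "valid_partition k r h (\<lambda>i. i div r)"
  unfolding valid_partition_def
proof (intro conjI allI impI)
  fix i assume "i < k + h"
  thus "i div r < num_groups k r h" using ell_mult r0
    by (metis div_less_iff_less_mult)
next
  fix g assume "g < num_groups k r h"
  thus "card (group_members k h (\<lambda>i. i div r) g) = r" by (rule gm_card)
qed

end

theorem code_from_mu:
  fixes \<mu> :: "nat \<Rightarrow> 'a::{field,finite}"
  assumes c2: "(1::'a) + 1 = 0" and r0: "0 < r" and rd: "r dvd (k + h)" and k0: "0 < k"
    and MU: "MUprop k r h \<mu>"
  shows "\<exists>P::nat\<Rightarrow>nat\<Rightarrow>'a. max_recoverable_local_code k r h P (\<lambda>i. i div r)"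
proof -
  define ell where "ell = num_groups k r h"
  define N where "N = code_length k r h"
  define G where "G = Gof k h r"
  define lam where "lam = lamf k h \<mu>"
  define hv where "hv d = \<mu> (k + d)" for d
  have N_eq: "N = k + h + ell" by (simp add: N_def ell_def code_length_def)
  have hind: "indep2 hv {..<h}"
    unfolding indep2_def
  proof (intro allI impI)
    fix U assume U: "U \<subseteq> {..<h}" "U \<noteq> {}"
    define e where "e g = k + h + g" for g
    define S where "S = (\<lambda>d. k + d) ` U"
    have fU: "finite U" using U finite_subset by blast
    have injS: "inj_on (\<lambda>d. k + d) U" by (auto simp: inj_on_def)
    have cS: "card S = card U" unfolding S_def using card_image[OF injS] .
    have "card U \<le> h" using U by (metis card_lessThan card_mono finite_lessThan)
    have Sk: "\<forall>u\<in>S. u < k + h" using U by (auto simp: S_def)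
    have "(\<Sum>u\<in>S. lamf k h \<mu> u + lamf k h \<mu> (e (Gof k h r u))) \<noteq> 0"
      using MU unfolding MUprop_def
    proof (elim allE impE)
      show "\<forall>g<num_groups k r h. e g < code_length k r h \<and> Gof k h r (e g) = g"
        by (simp add: e_def code_length_def Gof_def)
      show "S \<subseteq> {..<code_length k r h}" using Sk by (auto simp: code_length_def)
      show "S \<noteq> {}" using U by (simp add: S_def)
      show "card S \<le> h" using cS \<open>card U \<le> h\<close> by simp
      show "\<forall>u\<in>S. u \<noteq> e (Gof k h r u)" using Sk by (auto simp: e_def)
    qed
    moreover have "(\<Sum>u\<in>S. lamf k h \<mu> u + lamf k h \<mu> (e (Gof k h r u))) = (\<Sum>u\<in>S. \<mu> u)"
      using Sk by (intro sum.cong) (auto simp: lamf_def e_def)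
    moreover have "(\<Sum>u\<in>S. \<mu> u) = sum hv U" unfolding S_def hv_def
      by (simp add: sum.reindex[OF injS])
    ultimately show "sum hv U \<noteq> 0" by simp
  qed
  \<comment> \<open>solving for the heavy parities\<close>
  define D where "D = {y::nat \<Rightarrow> 'a. \<forall>d\<ge>h. y d = 0}"
  define F where "F y = (\<lambda>s. if s < h then (\<Sum>d<h. y d * hv d ^ (2^s)) else 0)" for y :: "nat \<Rightarrow> 'a"
  have finD: "finite D" unfolding D_def by (rule finite_D)
  have FD: "F ` D \<subseteq> D" by (auto simp: F_def D_def)
  have injF: "inj_on F D"
  proof (rule inj_onI)
    fix y y' assume y: "y \<in> D" "y' \<in> D" "F y = F y'"
    have "\<forall>s<h. (\<Sum>d\<in>{..<h}. (y d - y' d) * hv d ^ (2^s)) = 0"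
    proof (intro allI impI)
      fix s assume s: "s < h"
      have "F y s = F y' s" using y(3) by simp
      hence "(\<Sum>d<h. y d * hv d ^ (2^s)) = (\<Sum>d<h. y' d * hv d ^ (2^s))" using s by (simp add: F_def)
      thus "(\<Sum>d\<in>{..<h}. (y d - y' d) * hv d ^ (2^s)) = 0"
        by (simp add: left_diff_distrib sum_subtractf)
    qed
    hence "\<forall>d\<in>{..<h}. y d - y' d = 0"
      using moore[OF c2, of "{..<h}" h hv "\<lambda>d. y d - y' d"] hind by simp
    hence yy: "\<forall>d\<in>{..<h}. y d = y' d" by simp
    show "y = y'"
    proof
      fix d show "y d = y' d"
        using yy y(1,2) unfolding D_def by (cases "d < h") auto
    qed
  qed
  have surjF: "F ` D = D" using endo_inj_surj[OF finD FD injF] .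
  define T where "T i = (\<lambda>s. if s < h then \<mu> i ^ (2^s) else 0)" for i
  have "T i \<in> D" for i by (simp add: T_def D_def)
  hence exY: "\<exists>y. y \<in> D \<and> F y = T i" for i using surjF by (metis imageE)
  define Y where "Y i = (SOME y. y \<in> D \<and> F y = T i)" for i
  have Y: "F (Y i) = T i" for i using someI_ex[OF exY[of i]] by (simp add: Y_def)
  define P where "P d i = Y i d" for d i
  have Pprop: "(\<Sum>d<h. P d i * hv d ^ (2^s)) = \<mu> i ^ (2^s)" if "s < h" for i s
  proof -
    have "F (Y i) s = T i s" using Y by simp
    thus ?thesis using that by (simp add: F_def T_def P_def)
  qed
  \<comment> \<open>global checks\<close>
  have GC: "(\<Sum>u<k+h. sym_val k P x u * \<mu> u ^ (2^s)) = 0" if s: "s < h" for x s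
  proof -
    have "(\<Sum>u<k+h. sym_val k P x u * \<mu> u ^ (2^s)) =
        (\<Sum>u<k. x u * \<mu> u ^ (2^s)) + (\<Sum>d<h. (\<Sum>j<k. P d j * x j) * hv d ^ (2^s))"
      by (simp add: split_sum sym_val_def hv_def)
    also have "(\<Sum>d<h. (\<Sum>j<k. P d j * x j) * hv d ^ (2^s)) = (\<Sum>j<k. x j * (\<Sum>d<h. P d j * hv d ^ (2^s)))"
    proof -
      have "(\<Sum>d<h. (\<Sum>j<k. P d j * x j) * hv d ^ (2^s)) = (\<Sum>d<h. \<Sum>j<k. x j * (P d j * hv d ^ (2^s)))"
        by (intro sum.cong refl) (simp add: sum_distrib_left sum_distrib_right ac_simps)
      also have "\<dots> = (\<Sum>j<k. \<Sum>d<h. x j * (P d j * hv d ^ (2^s)))" by (rule sum.swap)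
      also have "\<dots> = (\<Sum>j<k. x j * (\<Sum>d<h. P d j * hv d ^ (2^s)))" by (simp add: sum_distrib_left)
      finally show ?thesis .
    qed
    also have "\<dots> = (\<Sum>j<k. x j * \<mu> j ^ (2^s))" using Pprop s by simp
    finally show ?thesis using c2_add_self[OF c2] by simp
  qed
  have enc_lt: "encode k r h P (\<lambda>i. i div r) x u = sym_val k P x u" if "u < k + h" for x u
    using that by (simp add: encode_def)
  have LS: "(\<Sum>u\<in>{u. u < N \<and> G u = g}. encode k r h P (\<lambda>i. i div r) x u) = 0" if g: "g < ell" for x g
  proof -
    define gm where "gm = group_members k h (\<lambda>i. i div r) g"
    have gmeq: "gm = {i. i < k + h \<and> i div r = g}" by (simp add: gm_def group_members_def)
    have set_eq: "{u. u < N \<and> G u = g} = insert (k + h + g) gm"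
      using g by (auto simp: gmeq N_eq G_def Gof_def)
    have fin: "finite gm" by (simp add: gmeq)
    have nin: "k + h + g \<notin> gm" by (simp add: gmeq)
    have "encode k r h P (\<lambda>i. i div r) x (k + h + g) = (\<Sum>j\<in>gm. sym_val k P x j)"
      using g by (simp add: encode_def code_length_def ell_def gm_def)
    moreover have "(\<Sum>j\<in>gm. encode k r h P (\<lambda>i. i div r) x j) = (\<Sum>j\<in>gm. sym_val k P x j)"
      by (intro sum.cong) (auto simp: gmeq encode_def)
    ultimately show ?thesis unfolding set_eq using fin nin c2_add_self[OF c2] by simp
  qed
  show ?thesis
  proof (rule exI[where x = P])
    show "max_recoverable_local_code k r h P (\<lambda>i. i div r)"
      unfolding max_recoverable_local_code_def
    proof (intro conjI allI impI)
      show "valid_partition k r h (\<lambda>i. i div r)" by (rule valid_part[OF r0 rd])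
      fix E assume E: "E \<subseteq> {..<code_length k r h} \<and>
          (\<forall>g<num_groups k r h. card (E \<inter> local_group k h (\<lambda>i. i div r) g) = 1)"
      have lg: "local_group k h (\<lambda>i. i div r) g = {u. u < N \<and> G u = g}" if "g < ell" for g
        using lg_eq[OF r0 rd] that by (simp add: N_def G_def ell_def)
      have ex1: "\<exists>v. E \<inter> {u. u < N \<and> G u = g} = {v}" if "g < ell" for g
        using E that lg[OF that] by (metis card_1_singletonE ell_def)
      define e where "e g = (THE v. E \<inter> {u. u < N \<and> G u = g} = {v})" for g
      have e: "E \<inter> {u. u < N \<and> G u = g} = {e g}" if gl: "g < ell" for g
      proof -
        obtain v where v: "E \<inter> {u. u < N \<and> G u = g} = {v}" using ex1[OF gl] by blast
        have "e g = v" unfolding e_def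
        proof (rule the_equality)
          show "E \<inter> {u. u < N \<and> G u = g} = {v}" by (rule v)
          fix x assume "E \<inter> {u. u < N \<and> G u = g} = {x}"
          hence "{x} = {v}" using v by (simp only:)
          thus "x = v" by simp
        qed
        thus ?thesis using v by simp
      qed
      have eN: "e g < N" "G (e g) = g" "e g \<in> E" if "g < ell" for g using e[OF that] by auto
      have GN: "G u < ell" if "u < N" for u
        using Gof_lt[OF r0 rd] that by (simp add: G_def ell_def N_def)
      have EN: "E \<subseteq> {..<N}" using E by (simp add: N_def)
      have inE: "u = e (G u)" if "u \<in> E" for u
      proof -
        have "u < N" using EN that by auto
        hence "u \<in> E \<inter> {v. v < N \<and> G v = G u}" using that by simp
        thus ?thesis using e[OF GN[OF \<open>u < N\<close>]] by simp
      qed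
      define W where "W x = {i. i < N \<and> i \<notin> E \<and> encode k r h P (\<lambda>i. i div r) x i \<noteq> 0}" for x
      have main: "\<forall>i<N. encode k r h P (\<lambda>i. i div r) x i = 0" if W: "card (W x) \<le> h" for x
      proof -
        define cw where "cw = encode k r h P (\<lambda>i. i div r) x"
        define \<delta> where "\<delta> u = lam u + lam (e (G u))" for u
        have finW: "finite (W x)" by (simp add: W_def)
        have glob: "(\<Sum>u<N. cw u * lam u ^ (2^s)) = 0" if s: "s < h" for s
        proof -
          have "(\<Sum>u<N. cw u * lam u ^ (2^s)) = (\<Sum>u<k+h. cw u * lam u ^ (2^s)) + (\<Sum>d<ell. cw (k+h+d) * lam (k+h+d) ^ (2^s))"
            unfolding N_eq by (rule split_sum)
          also have "(\<Sum>d<ell. cw (k+h+d) * lam (k+h+d) ^ (2^s)) = 0"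
            using s by (simp add: lam_def lamf_def)
          also have "(\<Sum>u<k+h. cw u * lam u ^ (2^s)) = (\<Sum>u<k+h. sym_val k P x u * \<mu> u ^ (2^s))"
            by (intro sum.cong) (auto simp: cw_def enc_lt lam_def lamf_def)
          finally show ?thesis using GC[OF s] by simp
        qed
        have grp: "(\<Sum>u<N. cw u * lam (e (G u)) ^ (2^s)) = 0" for s
        proof -
          have "(\<Sum>u<N. cw u * lam (e (G u)) ^ (2^s)) =
              (\<Sum>g\<in>{..<ell}. \<Sum>u\<in>{u \<in> {..<N}. G u = g}. cw u * lam (e (G u)) ^ (2^s))"
            by (rule sum.group[symmetric]) (use GN in auto)
          also have "\<dots> = (\<Sum>g\<in>{..<ell}. lam (e g) ^ (2^s) * (\<Sum>u\<in>{u. u < N \<and> G u = g}. cw u))"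
            by (intro sum.cong refl) (auto simp: sum_distrib_left mult.commute intro!: sum.cong)
          also have "\<dots> = 0" using LS by (simp add: cw_def)
          finally show ?thesis .
        qed
        have eqW: "(\<Sum>u\<in>W x. cw u * \<delta> u ^ (2^s)) = 0" if s: "s < h" for s
        proof -
          have "(\<Sum>u<N. cw u * \<delta> u ^ (2^s)) = (\<Sum>u<N. cw u * lam u ^ (2^s)) + (\<Sum>u<N. cw u * lam (e (G u)) ^ (2^s))"
            by (simp add: \<delta>_def c2_frob[OF c2] distrib_left sum.distrib)
          hence "(\<Sum>u<N. cw u * \<delta> u ^ (2^s)) = 0" using glob[OF s] grp[of s] by simp
          moreover have "(\<Sum>u<N. cw u * \<delta> u ^ (2^s)) = (\<Sum>u\<in>W x. cw u * \<delta> u ^ (2^s))"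
          proof (rule sum.mono_neutral_right)
            show "finite {..<N}" by simp
            show "W x \<subseteq> {..<N}" by (auto simp: W_def)
            show "\<forall>i\<in>{..<N} - W x. cw i * \<delta> i ^ 2 ^ s = 0"
            proof
              fix i assume i: "i \<in> {..<N} - W x"
              show "cw i * \<delta> i ^ 2 ^ s = 0"
              proof (cases "i \<in> E")
                case True
                hence "\<delta> i = 0" using inE[OF True] c2_add_self[OF c2] by (simp add: \<delta>_def)
                then show ?thesis by (simp add: zero_power)
              next
                case False
                then show ?thesis using i by (simp add: W_def cw_def)
              qed
            qed
          qed
          ultimately show ?thesis by simp
        qed
        have indW: "indep2 \<delta> (W x)"
          unfolding indep2_def
        proof (intro allI impI)
          fix U assume U: "U \<subseteq> W x" "U \<noteq> {}"
          show "sum \<delta> U \<noteq> 0"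
            using MU unfolding MUprop_def
          proof (elim allE[of _ e] allE[of _ U] impE)
            show "\<forall>g<num_groups k r h. e g < code_length k r h \<and> Gof k h r (e g) = g"
              using eN by (simp add: ell_def N_def G_def)
            show "U \<subseteq> {..<code_length k r h}" using U by (auto simp: W_def N_def)
            show "U \<noteq> {}" by fact
            show "card U \<le> h" using U W finW by (meson card_mono le_trans)
            show "\<forall>u\<in>U. u \<noteq> e (Gof k h r u)"
            proof
              fix u assume "u \<in> U"
              hence u: "u < N" "u \<notin> E" using U by (auto simp: W_def)
              thus "u \<noteq> e (Gof k h r u)" using eN(3)[OF GN[OF u(1)]] by (auto simp: G_def)
            qed
            assume "(\<Sum>u\<in>U. lamf k h \<mu> u + lamf k h \<mu> (e (Gof k h r u))) \<noteq> 0"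
            thus "sum \<delta> U \<noteq> 0" by (simp add: \<delta>_def lam_def G_def)
          qed
        qed
        have "\<forall>u\<in>W x. cw u = 0"
          using moore[OF c2 finW W indW] eqW by blast
        hence W0: "W x = {}" by (auto simp: W_def cw_def)
        show ?thesis
        proof (intro allI impI)
          fix i assume i: "i < N"
          show "encode k r h P (\<lambda>i. i div r) x i = 0"
          proof (cases "i \<in> E")
            case False
            then show ?thesis using W0 i by (auto simp: W_def)
          next
            case True
            define g where "g = G i"
            have g: "g < ell" using GN[OF i] by (simp add: g_def)
            have "(\<Sum>u\<in>{u. u < N \<and> G u = g}. cw u) = (\<Sum>u\<in>{i}. cw u)"
            proof (rule sum.mono_neutral_right)
              show "finite {u. u < N \<and> G u = g}" by simp
              show "{i} \<subseteq> {u. u < N \<and> G u = g}" using i by (simp add: g_def)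
              show "\<forall>u\<in>{u. u < N \<and> G u = g} - {i}. cw u = 0"
              proof
                fix u assume u: "u \<in> {u. u < N \<and> G u = g} - {i}"
                have "u \<notin> E"
                proof
                  assume "u \<in> E"
                  hence "u = e g" using inE u by auto
                  moreover have "i = e g" using inE[OF True] by (simp add: g_def)
                  ultimately show False using u by simp
                qed
                thus "cw u = 0" using W0 u by (auto simp: W_def cw_def)
              qed
            qed
            thus ?thesis using LS[OF g, of x] by (simp add: cw_def)
          qed
        qed
      qed
      have x0: "x = (\<lambda>_. 0)" if x: "x \<in> messages k" and W: "card (W x) \<le> h" for x
      proof
        fix i
        show "x i = 0"
        proof (cases "i < k")
          case True
          hence "encode k r h P (\<lambda>i. i div r) x i = x i" by (simp add: encode_def sym_val_def)
          moreover have "i < N" using True by (simp add: N_eq)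
          ultimately show ?thesis using main[OF W] by simp
        next
          case False then show ?thesis using x by (simp add: messages_def)
        qed
      qed
      show "punctured_MDS k r h P (\<lambda>i. i div r) E"
        unfolding punctured_MDS_def
      proof (intro conjI ballI impI)
        fix x :: "nat \<Rightarrow> 'a" assume x: "x \<in> messages k"
          and z: "\<forall>i. i < code_length k r h \<and> i \<notin> E \<longrightarrow> encode k r h P (\<lambda>i. i div r) x i = 0"
        have "W x = {}" using z by (auto simp: W_def N_def)
        thus "x = (\<lambda>_. 0)" using x0[OF x] by simp
      next
        define A where "A = {punct_weight (code_length k r h) E (encode k r h P (\<lambda>i. i div r) x) | x.
            x \<in> messages k \<and> x \<noteq> (\<lambda>_. 0)}"
        have pw: "punct_weight (code_length k r h) E (encode k r h P (\<lambda>i. i div r) x) = card (W x)" for x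
          by (simp add: punct_weight_def W_def N_def)
        have lb: "h + 1 \<le> card (W x)" if "x \<in> messages k" "x \<noteq> (\<lambda>_. 0)" for x
        proof (rule ccontr)
          assume "\<not> h + 1 \<le> card (W x)"
          hence "card (W x) \<le> h" by simp
          thus False using x0 that by blast
        qed
        \<comment> \<open>Singleton bound: a message of weight at most h+1\<close>
        obtain x where xm: "x \<in> messages k" "x \<noteq> (\<lambda>_. 0)" "card (W x) \<le> h + 1"
        proof -
          define R where "R = {..<N} - E"
          have finE: "finite E" using EN finite_subset by blast
          have injE: "inj_on e {..<ell}"
            by (rule inj_onI) (metis eN(2) lessThan_iff)
          have "e ` {..<ell} \<subseteq> E" using eN by auto
          hence "card (e ` {..<ell}) \<le> card E" using finE by (rule card_mono[rotated])
          hence cE: "ell \<le> card E" using card_image[OF injE] by simp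
          have cR: "card R = N - card E" unfolding R_def using EN finE by (simp add: card_Diff_subset)
          hence cR': "card R \<le> k + h" using cE N_eq by simp
          obtain Z where Z: "Z \<subseteq> R" "card Z = min (k - 1) (card R)" "finite Z"
            by (rule obtain_subset_with_card_n[of "min (k - 1) (card R)" R]) auto
          define q where "q = card (UNIV :: 'a set)"
          have q2: "2 \<le> q"
          proof -
            have "{0::'a, 1} \<subseteq> UNIV" by simp
            hence "card {0::'a, 1} \<le> q" unfolding q_def by (intro card_mono) auto
            thus ?thesis by simp
          qed
          define M :: "(nat \<Rightarrow> 'a) set" where "M = messages k"
          have finM: "finite M" unfolding M_def messages_def by (rule finite_D)
          have bijM: "bij_betw (\<lambda>x. restrict x {..<k}) M (Pi\<^sub>E {..<k} (\<lambda>_. UNIV :: 'a set))"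
            unfolding bij_betw_def
          proof
            show "inj_on (\<lambda>x. restrict x {..<k}) M"
            proof (rule inj_onI)
              fix x y assume xy: "x \<in> M" "y \<in> M" "restrict x {..<k} = restrict y {..<k}"
              show "x = y"
              proof
                fix i show "x i = y i"
                proof (cases "i < k")
                  case True then show ?thesis using fun_cong[OF xy(3), of i] by simp
                next
                  case False then show ?thesis using xy(1,2) by (simp add: M_def messages_def)
                qed
              qed
            qed
            show "(\<lambda>x. restrict x {..<k}) ` M = Pi\<^sub>E {..<k} (\<lambda>_. UNIV)"
            proof
              show "(\<lambda>x. restrict x {..<k}) ` M \<subseteq> Pi\<^sub>E {..<k} (\<lambda>_. UNIV)" by (intro image_subsetI restrict_PiE_iff[THEN iffD2]) simp
              show "Pi\<^sub>E {..<k} (\<lambda>_. UNIV) \<subseteq> (\<lambda>x. restrict x {..<k}) ` M"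
              proof
                fix f assume f: "f \<in> Pi\<^sub>E {..<k} (\<lambda>_. UNIV :: 'a set)"
                define x where "x i = (if i < k then f i else 0)" for i
                have "x \<in> M" by (simp add: M_def messages_def x_def)
                moreover have "restrict x {..<k} = f" using f
                  by (auto simp: x_def fun_eq_iff PiE_def extensional_def)
                ultimately show "f \<in> (\<lambda>x. restrict x {..<k}) ` M" by blast
              qed
            qed
          qed
          have cM: "card M = q ^ k"
            using bij_betw_same_card[OF bijM] by (simp add: card_PiE q_def)
          define Phi where "Phi x = restrict (encode k r h P (\<lambda>i. i div r) x) Z" for x
          have "Phi ` M \<subseteq> Pi\<^sub>E Z (\<lambda>_. UNIV)" unfolding Phi_def by (intro image_subsetI restrict_PiE_iff[THEN iffD2]) simp
          hence "card (Phi ` M) \<le> card (Pi\<^sub>E Z (\<lambda>_. UNIV :: 'a set))"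
            by (intro card_mono) (auto simp: Z(3) intro!: finite_PiE)
          also have "\<dots> = q ^ card Z" using Z(3) by (simp add: card_PiE q_def)
          also have "\<dots> \<le> q ^ (k - 1)" using Z(2) q2 by (intro power_increasing) auto
          also have "\<dots> < q ^ k" using q2 k0 by (intro power_strict_increasing) auto
          finally have "card (Phi ` M) < card M" using cM by simp
          hence "\<not> inj_on Phi M" using card_image by fastforce
          then obtain x y where xy: "x \<in> M" "y \<in> M" "x \<noteq> y" "Phi x = Phi y"
            unfolding inj_on_def by blast
          define d where "d i = x i - y i" for i
          have dM: "d \<in> messages k" using xy(1,2) by (simp add: M_def messages_def d_def)
          have dne: "d \<noteq> (\<lambda>_. 0)"
          proof
            assume "d = (\<lambda>_. 0)"
            hence "x = y" by (auto simp: fun_eq_iff d_def)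
            with xy(3) show False by simp
          qed
          have dZ: "encode k r h P (\<lambda>i. i div r) d i = 0" if "i \<in> Z" for i
          proof -
            have "encode k r h P (\<lambda>i. i div r) x i = encode k r h P (\<lambda>i. i div r) y i"
              using fun_cong[OF xy(4), of i] that by (simp add: Phi_def)
            thus ?thesis using encode_diff[of k r h P "\<lambda>i. i div r" x y i] by (simp add: d_def[abs_def])
          qed
          have "W d \<subseteq> R - Z" using dZ by (auto simp: W_def R_def)
          hence "card (W d) \<le> card (R - Z)"
            by (intro card_mono) (auto simp: R_def)
          also have "\<dots> = card R - card Z" using Z by (simp add: card_Diff_subset)
          also have "\<dots> \<le> h + 1" using Z(2) cR' by auto
          finally show ?thesis using that dM dne by blast
        qed
        have finA: "finite A"
        proof -
          have "A \<subseteq> {..N}" unfolding A_def pw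
          proof
            fix n assume "n \<in> {card (W x) |x. x \<in> messages k \<and> x \<noteq> (\<lambda>_. 0)}"
            then obtain x where "n = card (W x)" by blast
            moreover have "W x \<subseteq> {..<N}" by (auto simp: W_def)
            ultimately show "n \<in> {..N}" by (metis atMost_iff card_lessThan card_mono finite_lessThan)
          qed
          thus ?thesis using finite_subset by blast
        qed
        have "card (W x) = h + 1" using xm lb by (meson le_antisym)
        hence "h + 1 \<in> A" using xm unfolding A_def pw by force
        moreover have "\<forall>a\<in>A. h + 1 \<le> a" using lb unfolding A_def pw by blast
        ultimately show "Min A = h + 1" using finA by (intro Min_eqI) auto
      qed
    qed
  qed
qed


section \<open>Coordinates w.r.t. an F2-basis\<close>

definition coord :: "(nat \<Rightarrow> 'b::comm_ring_1) \<Rightarrow> nat \<Rightarrow> 'b \<Rightarrow> nat set" where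
  "coord B d y = (THE U. U \<subseteq> {..<d} \<and> sum B U = y)"

lemma coord_spec:
  fixes B :: "nat \<Rightarrow> 'b::comm_ring_1"
  assumes c2: "(1::'b) + 1 = 0" and fin: "finite V" and cV: "card V = 2^d"
    and BV: "\<forall>i<d. B i \<in> V" and ind: "indep2 B {..<d}"
    and z: "0 \<in> V" and cl: "\<forall>x\<in>V. \<forall>y\<in>V. x + y \<in> V"
    and y: "y \<in> V"
  shows "coord B d y \<subseteq> {..<d} \<and> sum B (coord B d y) = y"
proof -
  obtain U where U: "U \<subseteq> {..<d}" "sum B U = y" using span_all[OF c2 fin cV BV ind z cl y] by blast
  have "coord B d y = U" unfolding coord_def
  proof (rule the_equality)
    show "U \<subseteq> {..<d} \<and> sum B U = y" using U by simp
    fix U' assume "U' \<subseteq> {..<d} \<and> sum B U' = y"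
    thus "U' = U" using indep2_unique[OF c2 ind] U by auto
  qed
  thus ?thesis using U by simp
qed

lemma coord_add:
  fixes B :: "nat \<Rightarrow> 'b::comm_ring_1"
  assumes c2: "(1::'b) + 1 = 0" and fin: "finite V" and cV: "card V = 2^d"
    and BV: "\<forall>i<d. B i \<in> V" and ind: "indep2 B {..<d}"
    and z: "0 \<in> V" and cl: "\<forall>x\<in>V. \<forall>y\<in>V. x + y \<in> V"
    and y: "y \<in> V" and y': "y' \<in> V"
  shows "coord B d (y + y') = (coord B d y - coord B d y') \<union> (coord B d y' - coord B d y)"
proof -
  note cs = coord_spec[OF c2 fin cV BV ind z cl]
  have a: "coord B d y \<subseteq> {..<d}" "sum B (coord B d y) = y" using cs[OF y] by auto
  have b: "coord B d y' \<subseteq> {..<d}" "sum B (coord B d y') = y'" using cs[OF y'] by auto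
  have c: "coord B d (y + y') \<subseteq> {..<d}" "sum B (coord B d (y + y')) = y + y'"
    using cs[of "y + y'"] cl y y' by auto
  have f: "finite (coord B d y)" "finite (coord B d y')" using a(1) b(1) finite_subset by blast+
  have "sum B ((coord B d y - coord B d y') \<union> (coord B d y' - coord B d y)) = y + y'"
    using c2_sum_Un_diff[OF c2 f, of B] a(2) b(2) by simp
  moreover have "(coord B d y - coord B d y') \<union> (coord B d y' - coord B d y) \<subseteq> {..<d}"
    using a(1) b(1) by blast
  ultimately show ?thesis using c by (intro indep2_unique[OF c2 ind]) auto
qed

lemma coord_zero:
  fixes B :: "nat \<Rightarrow> 'b::comm_ring_1"
  assumes c2: "(1::'b) + 1 = 0" and ind: "indep2 B {..<d}"
  shows "coord B d 0 = {}"
  unfolding coord_def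
proof (rule the_equality)
  show "{} \<subseteq> {..<d} \<and> sum B {} = 0" by simp
  fix U assume "U \<subseteq> {..<d} \<and> sum B U = 0"
  thus "U = {}" using indep2_unique[OF c2 ind, of U "{}"] by simp
qed

lemma pow_decomp:
  assumes "2 \<le> (q::nat)" "0 < e"
  shows "\<exists>a e'. e = e' * q ^ a \<and> \<not> q dvd e' \<and> 0 < e'"
  using assms(2)
proof (induction e rule: less_induct)
  case (less e)
  show ?case
  proof (cases "q dvd e")
    case False
    then show ?thesis using less.prems by (intro exI[of _ 0] exI[of _ e]) simp
  next
    case True
    then obtain e1 where e1: "e = q * e1" by blast
    have "0 < e1" using less.prems e1 by (cases e1) auto
    moreover have "e1 < e" using e1 assms(1) \<open>0 < e1\<close> by simp
    ultimately obtain a e' where "e1 = e' * q ^ a" "\<not> q dvd e'" "0 < e'" using less.IH by blast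
    thus ?thesis using e1 by (intro exI[of _ "Suc a"] exI[of _ e']) (simp add: ac_simps)
  qed
qed


lemma Kset_closed: "\<forall>x\<in>Kset m. \<forall>y\<in>Kset m. x + y \<in> Kset m"
  using Kset_add by blast

locale constr =
  fixes k r h m w :: nat and \<beta> \<kappa> \<alpha> :: "nat \<Rightarrow> C" and b :: "nat \<Rightarrow> 'a::field"
    and goodE :: "nat \<Rightarrow> nat"
  assumes c2a: "(1::'a) + 1 = 0"
    and r0: "0 < r" and rd: "r dvd (k + h)" and rm: "r dvd m"
    and ellm: "num_groups k r h \<le> 2^m"
    and \<beta>in: "\<forall>i<r. \<beta> i \<in> Kset r" and \<beta>ind: "indep2 \<beta> {..<r}"
    and \<kappa>in: "\<forall>i<m. \<kappa> i \<in> Kset m" and \<kappa>ind: "indep2 \<kappa> {..<m}"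
    and \<alpha>in: "\<forall>g. \<alpha> g \<in> Kset m" and \<alpha>inj: "inj_on \<alpha> {..<num_groups k r h}"
    and bind: "indep2 b {..<r + m * w}"
    and good: "\<forall>e. 0 < e \<and> e < h \<and> \<not> 2^r dvd e \<longrightarrow> (\<exists>j<w. goodE j = e)"
begin

definition bitf :: "C \<Rightarrow> (nat \<Rightarrow> C) \<Rightarrow> nat \<Rightarrow> bool" where
  "bitf y0 yf i = (if i < r then i \<in> coord \<beta> r y0
      else (i - r) mod m \<in> coord \<kappa> m (yf ((i - r) div m)))"

definition Phi2 :: "C \<Rightarrow> (nat \<Rightarrow> C) \<Rightarrow> 'a" where
  "Phi2 y0 yf = (\<Sum>i<r + m * w. if bitf y0 yf i then b i else 0)"

definition Dom :: "C \<Rightarrow> (nat \<Rightarrow> C) \<Rightarrow> bool" where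
  "Dom y0 yf \<longleftrightarrow> y0 \<in> Kset r \<and> (\<forall>j<w. yf j \<in> Kset m)"

lemma Kr: "finite (Kset r)" "card (Kset r) = 2^r" using card_Kset[OF r0] by auto

lemma Km: "0 < m \<Longrightarrow> finite (Kset m) \<and> card (Kset m) = 2^m" using card_Kset by blast

lemma cr_spec: "y \<in> Kset r \<Longrightarrow> coord \<beta> r y \<subseteq> {..<r} \<and> sum \<beta> (coord \<beta> r y) = y"
  by (rule coord_spec[OF c2C Kr \<beta>in \<beta>ind Kset_0 Kset_closed])

lemma cr_add: "y \<in> Kset r \<Longrightarrow> y' \<in> Kset r \<Longrightarrow>
    coord \<beta> r (y + y') = (coord \<beta> r y - coord \<beta> r y') \<union> (coord \<beta> r y' - coord \<beta> r y)"
  by (rule coord_add[OF c2C Kr \<beta>in \<beta>ind Kset_0 Kset_closed])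

lemma ck_spec: "0 < m \<Longrightarrow> y \<in> Kset m \<Longrightarrow> coord \<kappa> m y \<subseteq> {..<m} \<and> sum \<kappa> (coord \<kappa> m y) = y"
  using coord_spec[OF c2C _ _ \<kappa>in \<kappa>ind Kset_0 Kset_closed] Km by blast

lemma ck_add: "0 < m \<Longrightarrow> y \<in> Kset m \<Longrightarrow> y' \<in> Kset m \<Longrightarrow>
    coord \<kappa> m (y + y') = (coord \<kappa> m y - coord \<kappa> m y') \<union> (coord \<kappa> m y' - coord \<kappa> m y)"
  using coord_add[OF c2C _ _ \<kappa>in \<kappa>ind Kset_0 Kset_closed] Km by blast

lemma Dom_add: "Dom y0 yf \<Longrightarrow> Dom z0 zf \<Longrightarrow> Dom (y0 + z0) (\<lambda>j. yf j + zf j)"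
  by (simp add: Dom_def Kset_add)

lemma Dom_zero: "Dom 0 (\<lambda>_. 0)"
  by (simp add: Dom_def Kset_0)

lemma big_i:
  assumes "r \<le> i" "i < r + m * w"
  shows "0 < m" "(i - r) div m < w" "(i - r) mod m < m"
proof -
  have lt: "i - r < w * m" using assms by (simp add: mult.commute)
  thus "0 < m" by (cases m) auto
  thus "(i - r) mod m < m" by simp
  show "(i - r) div m < w" using lt by (simp add: less_mult_imp_div_less)
qed

lemma bit_add:
  assumes "Dom y0 yf" "Dom z0 zf" "i < r + m * w"
  shows "bitf (y0 + z0) (\<lambda>j. yf j + zf j) i = (bitf y0 yf i \<noteq> bitf z0 zf i)"
proof (cases "i < r")
  case True
  then show ?thesis using assms cr_add[of y0 z0] by (auto simp: bitf_def Dom_def)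
next
  case False
  note bi = big_i[of i] 
  have m0: "0 < m" and j: "(i - r) div m < w" using bi False assms(3) by auto
  have "yf ((i - r) div m) \<in> Kset m" "zf ((i - r) div m) \<in> Kset m"
    using assms(1,2) j by (auto simp: Dom_def)
  then show ?thesis using False ck_add[OF m0] by (auto simp: bitf_def)
qed

lemma Phi2_add:
  assumes "Dom y0 yf" "Dom z0 zf"
  shows "Phi2 (y0 + z0) (\<lambda>j. yf j + zf j) = Phi2 y0 yf + Phi2 z0 zf"
proof -
  have "Phi2 (y0 + z0) (\<lambda>j. yf j + zf j) =
      (\<Sum>i<r + m * w. (if bitf y0 yf i then b i else 0) + (if bitf z0 zf i then b i else 0))"
    unfolding Phi2_def
  proof (intro sum.cong refl)
    fix i assume i: "i \<in> {..<r + m * w}"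
    show "(if bitf (y0 + z0) (\<lambda>j. yf j + zf j) i then b i else 0) =
        (if bitf y0 yf i then b i else 0) + (if bitf z0 zf i then b i else 0)"
      using bit_add[OF assms, of i] i c2_add_self[OF c2a, of "b i"] by auto
  qed
  thus ?thesis by (simp add: Phi2_def sum.distrib)
qed

lemma Phi2_zero: "Phi2 0 (\<lambda>_. 0) = 0"
proof -
  have z1: "coord \<beta> r 0 = {}" by (rule coord_zero[OF c2C \<beta>ind])
  have z2: "coord \<kappa> m 0 = {}" by (rule coord_zero[OF c2C \<kappa>ind])
  have "\<not> bitf 0 (\<lambda>_. 0) i" for i by (simp add: bitf_def z1 z2)
  thus ?thesis by (simp add: Phi2_def)
qed

lemma Dom_sum:
  assumes "finite S" "\<forall>u\<in>S. Dom (a u) (f u)"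
  shows "Dom (\<Sum>u\<in>S. a u) (\<lambda>j. \<Sum>u\<in>S. f u j)"
  using assms
proof (induction S rule: finite_induct)
  case empty then show ?case using Dom_zero by simp
next
  case (insert x F)
  hence "Dom (a x + (\<Sum>u\<in>F. a u)) (\<lambda>j. f x j + (\<Sum>u\<in>F. f u j))"
    by (intro Dom_add) auto
  thus ?case using insert(1,2) by simp
qed

lemma Phi2_sum:
  assumes "finite S" "\<forall>u\<in>S. Dom (a u) (f u)"
  shows "Phi2 (\<Sum>u\<in>S. a u) (\<lambda>j. \<Sum>u\<in>S. f u j) = (\<Sum>u\<in>S. Phi2 (a u) (f u))"
  using assms
proof (induction S rule: finite_induct)
  case empty then show ?case using Phi2_zero by simp
next
  case (insert x F)
  have d1: "Dom (a x) (f x)" using insert by simp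
  have d2: "Dom (\<Sum>u\<in>F. a u) (\<lambda>j. \<Sum>u\<in>F. f u j)" using insert by (intro Dom_sum) auto
  have "Phi2 (\<Sum>u\<in>insert x F. a u) (\<lambda>j. \<Sum>u\<in>insert x F. f u j) =
      Phi2 (a x + (\<Sum>u\<in>F. a u)) (\<lambda>j. f x j + (\<Sum>u\<in>F. f u j))"
    using insert(1,2) by simp
  also have "\<dots> = Phi2 (a x) (f x) + Phi2 (\<Sum>u\<in>F. a u) (\<lambda>j. \<Sum>u\<in>F. f u j)"
    by (rule Phi2_add[OF d1 d2])
  finally show ?case using insert by simp
qed

lemma Phi2_eq0:
  assumes d: "Dom y0 yf" and z: "Phi2 y0 yf = 0"
  shows "y0 = 0 \<and> (0 < m \<longrightarrow> (\<forall>j<w. yf j = 0))"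
proof -
  define I where "I = {i \<in> {..<r + m * w}. bitf y0 yf i}"
  have "Phi2 y0 yf = sum b I" unfolding Phi2_def I_def by (rule sum.inter_filter[symmetric]) simp
  hence "sum b I = 0" using z by simp
  moreover have "I \<subseteq> {..<r + m * w}" by (auto simp: I_def)
  ultimately have I0: "I = {}" using bind unfolding indep2_def by blast
  have nb: "\<not> bitf y0 yf i" if "i < r + m * w" for i using I0 that by (auto simp: I_def)
  have y0: "y0 = 0"
  proof -
    have cs: "coord \<beta> r y0 \<subseteq> {..<r}" "sum \<beta> (coord \<beta> r y0) = y0" using cr_spec d by (auto simp: Dom_def)
    have "coord \<beta> r y0 = {}"
    proof (rule ccontr)
      assume "coord \<beta> r y0 \<noteq> {}"
      then obtain i where i: "i \<in> coord \<beta> r y0" by blast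
      hence "i < r" using cs by auto
      hence "bitf y0 yf i" using i by (simp add: bitf_def)
      thus False using nb[of i] \<open>i < r\<close> by simp
    qed
    thus ?thesis using cs by simp
  qed
  have "yf j = 0" if m0: "0 < m" and j: "j < w" for j
  proof -
    have cs: "coord \<kappa> m (yf j) \<subseteq> {..<m}" "sum \<kappa> (coord \<kappa> m (yf j)) = yf j"
      using ck_spec[OF m0] d j by (auto simp: Dom_def)
    have "coord \<kappa> m (yf j) = {}"
    proof (rule ccontr)
      assume "coord \<kappa> m (yf j) \<noteq> {}"
      then obtain i' where i': "i' \<in> coord \<kappa> m (yf j)" by blast
      hence i'm: "i' < m" using cs by auto
      define i where "i = r + (j * m + i')"
      have "j * m + i' < (j + 1) * m" using i'm by simp
      also have "\<dots> \<le> w * m" using j by (intro mult_le_mono1) simp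
      finally have "i < r + m * w" by (simp add: i_def mult.commute)
      moreover have "(i - r) div m = j" "(i - r) mod m = i'" using i'm m0
        by (simp_all add: i_def)
      ultimately have "bitf y0 yf i" using i' by (simp add: bitf_def i_def)
      moreover have "i < r + m * w" using \<open>i < r + m * w\<close> .
      ultimately show False using nb by blast
    qed
    thus ?thesis using cs by simp
  qed
  thus ?thesis using y0 by blast
qed


definition Bp :: "nat \<Rightarrow> C" where "Bp u = (if u < k + h then \<beta> (u mod r) else 0)"
definition Yf :: "nat \<Rightarrow> nat \<Rightarrow> C" where "Yf u j = Bp u * \<alpha> (Gof k h r u) ^ goodE j"
definition mu :: "nat \<Rightarrow> 'a" where "mu u = Phi2 (Bp u) (Yf u)"

lemma Bp_in: "Bp u \<in> Kset r"
  using \<beta>in r0 by (auto simp: Bp_def Kset_0)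

lemma Dom_Y: "Dom (Bp u) (Yf u)"
proof -
  have "Bp u \<in> Kset m" using Bp_in Kset_sub[OF rm] by blast
  hence "Yf u j \<in> Kset m" for j unfolding Yf_def using \<alpha>in by (intro Kset_mult Kset_power) auto
  thus ?thesis using Bp_in by (simp add: Dom_def)
qed

lemma lam_eq: "lamf k h mu u = Phi2 (Bp u) (Yf u)"
proof (cases "u < k + h")
  case True then show ?thesis by (simp add: lamf_def mu_def)
next
  case False
  hence "Bp u = 0" "Yf u = (\<lambda>_. 0)" by (auto simp: Bp_def Yf_def fun_eq_iff)
  then show ?thesis using False Phi2_zero by (simp add: lamf_def)
qed

lemma gamma_ne:
  assumes eh: "\<forall>g<num_groups k r h. e g < code_length k r h \<and> Gof k h r (e g) = g"
    and S: "S \<subseteq> {..<code_length k r h}" and ne: "\<forall>u\<in>S. u \<noteq> e (Gof k h r u)"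
    and g: "g \<in> Gof k h r ` S"
  shows "(\<Sum>u\<in>{u\<in>S. Gof k h r u = g}. Bp u + Bp (e g)) \<noteq> 0"
proof -
  define G where "G = Gof k h r"
  define N where "N = code_length k r h"
  define Sg where "Sg = {u\<in>S. G u = g}"
  have finS: "finite S" using S finite_subset by blast
  have finSg: "finite Sg" using finS by (simp add: Sg_def)
  have Sgne: "Sg \<noteq> {}" using g by (auto simp: Sg_def G_def)
  obtain u0 where u0: "u0 \<in> S" "G u0 = g" using g by (auto simp: G_def)
  have gl: "g < num_groups k r h" using u0 S Gof_lt[OF r0 rd] by (auto simp: G_def)
  have eg: "e g < N" "G (e g) = g" using eh gl by (auto simp: G_def N_def)
  have egS: "e g \<notin> Sg" using ne by (auto simp: Sg_def G_def)
  define L where "L = {v. v < N \<and> G v = g}"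
  have SgL: "Sg \<subseteq> L" using S by (auto simp: Sg_def L_def N_def)
  have egL: "e g \<in> L" using eg by (simp add: L_def)
  define idx where "idx v = (if v < k + h then v mod r else r)" for v
  define \<beta>x where "\<beta>x j = (if j < r then \<beta> j else 0)" for j
  have Bpx: "Bp v = \<beta>x (idx v)" for v using r0 by (simp add: Bp_def \<beta>x_def idx_def)
  have idx_le: "idx v \<le> r" for v using r0 by (simp add: idx_def less_imp_le)
  have injL: "inj_on idx L"
  proof (rule inj_onI)
    fix v v' assume v: "v \<in> L" "v' \<in> L" "idx v = idx v'"
    show "v = v'"
    proof (cases "v < k + h")
      case True
      show ?thesis
      proof (cases "v' < k + h")
        case True
        have "v div r = g" "v' div r = g" using v \<open>v < k + h\<close> True by (auto simp: L_def G_def Gof_def)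
        moreover have "v mod r = v' mod r" using v(3) \<open>v < k + h\<close> True by (simp add: idx_def)
        ultimately show ?thesis by (metis div_mult_mod_eq)
      next
        case False
        then show ?thesis using v(3) \<open>v < k + h\<close> r0 mod_less_divisor[OF r0, of v] by (simp add: idx_def)
      qed
    next
      case False
      show ?thesis
      proof (cases "v' < k + h")
        case True
        then show ?thesis using v(3) False r0 mod_less_divisor[OF r0, of v'] by (simp add: idx_def)
      next
        case False2: False
        have "v - (k + h) = g" "v' - (k + h) = g" using v False False2 by (auto simp: L_def G_def Gof_def)
        then show ?thesis using False False2 by simp
      qed
    qed
  qed
  define J where "J = idx ` Sg"
  define j0 where "j0 = idx (e g)"
  have injSg: "inj_on idx Sg" using injL SgL inj_on_subset by blast
  have cJ: "card J = card Sg" unfolding J_def using card_image[OF injSg] .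
  have finJ: "finite J" using finSg by (simp add: J_def)
  have Jne: "J \<noteq> {}" using Sgne by (simp add: J_def)
  have j0J: "j0 \<notin> J"
  proof
    assume "j0 \<in> J"
    then obtain v where "v \<in> Sg" "idx v = idx (e g)" by (auto simp: J_def j0_def)
    hence "v = e g" using injL SgL egL by (meson inj_onD subsetD)
    with egS \<open>v \<in> Sg\<close> show False by simp
  qed
  have JL: "J \<subseteq> {..r}" using idx_le by (auto simp: J_def)
  have j0L: "j0 \<le> r" using idx_le by (simp add: j0_def)
  have sum1: "(\<Sum>u\<in>{u\<in>S. Gof k h r u = g}. Bp u + Bp (e g)) = (\<Sum>j\<in>J. \<beta>x j) + of_nat (card J) * \<beta>x j0"
  proof -
    have "(\<Sum>u\<in>{u\<in>S. Gof k h r u = g}. Bp u + Bp (e g)) = (\<Sum>u\<in>Sg. \<beta>x (idx u)) + (\<Sum>u\<in>Sg. \<beta>x j0)"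
      by (simp add: Sg_def G_def sum.distrib Bpx j0_def)
    also have "(\<Sum>u\<in>Sg. \<beta>x (idx u)) = (\<Sum>j\<in>J. \<beta>x j)"
      unfolding J_def by (rule sum.reindex[OF injSg, symmetric, unfolded o_def])
    also have "(\<Sum>u\<in>Sg. \<beta>x j0) = of_nat (card J) * \<beta>x j0" by (simp add: cJ)
    finally show ?thesis .
  qed
  define JJ where "JJ = (if even (card J) then J else insert j0 J)"
  have finJJ: "finite JJ" using finJ by (simp add: JJ_def)
  have sum2: "(\<Sum>j\<in>J. \<beta>x j) + of_nat (card J) * \<beta>x j0 = (\<Sum>j\<in>JJ. \<beta>x j)"
    using c2_of_nat[OF c2C, of "card J" "\<beta>x j0"] j0J finJ by (simp add: JJ_def add.commute)
  have sum3: "(\<Sum>j\<in>JJ. \<beta>x j) = (\<Sum>j\<in>JJ - {r}. \<beta> j)"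
  proof -
    have "(\<Sum>j\<in>JJ. \<beta>x j) = (\<Sum>j\<in>JJ - {r}. \<beta>x j)"
    proof (cases "r \<in> JJ")
      case True
      then show ?thesis using finJJ by (simp add: sum.remove \<beta>x_def)
    next
      case False then show ?thesis by simp
    qed
    also have "\<dots> = (\<Sum>j\<in>JJ - {r}. \<beta> j)"
    proof (rule sum.cong[OF refl])
      fix j assume "j \<in> JJ - {r}"
      hence "j \<le> r" "j \<noteq> r" using JL j0L by (auto simp: JJ_def split: if_splits)
      thus "\<beta>x j = \<beta> j" by (simp add: \<beta>x_def)
    qed
    finally show ?thesis .
  qed
  have JJsub: "JJ - {r} \<subseteq> {..<r}"
  proof
    fix j assume "j \<in> JJ - {r}"
    hence "j \<le> r" "j \<noteq> r" using JL j0L by (auto simp: JJ_def split: if_splits)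
    thus "j \<in> {..<r}" by simp
  qed
  have JJne: "JJ - {r} \<noteq> {}"
  proof (cases "even (card J)")
    case True
    show ?thesis
    proof
      assume "JJ - {r} = {}"
      hence "J \<subseteq> {r}" using True by (auto simp: JJ_def)
      hence "J = {r}" using Jne by blast
      thus False using True by simp
    qed
  next
    case False
    obtain j1 where j1: "j1 \<in> J" using Jne by blast
    have "j1 \<noteq> j0" using j1 j0J by blast
    hence "j1 \<in> JJ - {r} \<or> j0 \<in> JJ - {r}" using j1 False by (auto simp: JJ_def)
    thus ?thesis by blast
  qed
  have "sum \<beta> (JJ - {r}) \<noteq> 0" using \<beta>ind JJsub JJne unfolding indep2_def by blast
  thus ?thesis using sum1 sum2 sum3 by simp
qed

lemma MU: "MUprop k r h mu"
  unfolding MUprop_def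
proof (intro allI impI)
  fix e S
  assume eh: "\<forall>g<num_groups k r h. e g < code_length k r h \<and> Gof k h r (e g) = g"
    and S: "S \<subseteq> {..<code_length k r h}" and Sne: "S \<noteq> {}" and cS: "card S \<le> h"
    and ne: "\<forall>u\<in>S. u \<noteq> e (Gof k h r u)"
  define G where "G = Gof k h r"
  define ell where "ell = num_groups k r h"
  have finS: "finite S" using S finite_subset by blast
  have Gu: "G u < ell" if "u \<in> S" for u using that S Gof_lt[OF r0 rd] by (auto simp: G_def ell_def)
  have Gee: "G (e (G u)) = G u" if "u \<in> S" for u using eh Gu[OF that] by (simp add: G_def ell_def)
  define c where "c u = Bp u + Bp (e (G u))" for u
  define Zf where "Zf j = (\<Sum>u\<in>S. c u * \<alpha> (G u) ^ goodE j)" for j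
  have cin: "c u \<in> Kset r" for u by (simp add: c_def Kset_add Bp_in)
  have Yadd: "(\<lambda>j. Yf u j + Yf (e (G u)) j) = (\<lambda>j. c u * \<alpha> (G u) ^ goodE j)" if "u \<in> S" for u
    using Gee[OF that] by (simp add: Yf_def c_def G_def distrib_right fun_eq_iff)
  have DomU: "Dom (c u) (\<lambda>j. c u * \<alpha> (G u) ^ goodE j)" if "u \<in> S" for u
    using Dom_add[OF Dom_Y[of u] Dom_Y[of "e (G u)"]] Yadd[OF that] by (simp add: c_def)
  have Lsum: "(\<Sum>u\<in>S. lamf k h mu u + lamf k h mu (e (Gof k h r u))) = Phi2 (\<Sum>u\<in>S. c u) Zf"
  proof -
    have "(\<Sum>u\<in>S. lamf k h mu u + lamf k h mu (e (Gof k h r u))) =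
        (\<Sum>u\<in>S. Phi2 (c u) (\<lambda>j. c u * \<alpha> (G u) ^ goodE j))"
    proof (rule sum.cong[OF refl])
      fix u assume u: "u \<in> S"
      have "lamf k h mu u + lamf k h mu (e (Gof k h r u)) = Phi2 (Bp u) (Yf u) + Phi2 (Bp (e (G u))) (Yf (e (G u)))"
        by (simp add: lam_eq G_def)
      also have "\<dots> = Phi2 (c u) (\<lambda>j. Yf u j + Yf (e (G u)) j)"
        by (simp add: Phi2_add[OF Dom_Y Dom_Y] c_def)
      finally show "lamf k h mu u + lamf k h mu (e (Gof k h r u)) = Phi2 (c u) (\<lambda>j. c u * \<alpha> (G u) ^ goodE j)"
        using Yadd[OF u] by simp
    qed
    also have "\<dots> = Phi2 (\<Sum>u\<in>S. c u) Zf"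
      unfolding Zf_def by (rule Phi2_sum[symmetric, OF finS]) (use DomU in blast)
    finally show ?thesis .
  qed
  show "(\<Sum>u\<in>S. lamf k h mu u + lamf k h mu (e (Gof k h r u))) \<noteq> 0"
  proof
    assume "(\<Sum>u\<in>S. lamf k h mu u + lamf k h mu (e (Gof k h r u))) = 0"
    hence P0: "Phi2 (\<Sum>u\<in>S. c u) Zf = 0" using Lsum by simp
    have DZ: "Dom (\<Sum>u\<in>S. c u) Zf" unfolding Zf_def by (rule Dom_sum[OF finS]) (use DomU in blast)
    have Z0: "(\<Sum>u\<in>S. c u) = 0" and Zf0: "0 < m \<Longrightarrow> j < w \<Longrightarrow> Zf j = 0" for j
      using Phi2_eq0[OF DZ P0] by auto
    define Gs where "Gs = G ` S"
    define \<gamma> where "\<gamma> g = (\<Sum>u\<in>{u\<in>S. G u = g}. c u)" for g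
    have regroup: "(\<Sum>u\<in>S. c u * \<alpha> (G u) ^ ex) = (\<Sum>g\<in>Gs. \<gamma> g * \<alpha> g ^ ex)" for ex
    proof -
      have "(\<Sum>u\<in>S. c u * \<alpha> (G u) ^ ex) = (\<Sum>g\<in>Gs. \<Sum>u\<in>{u\<in>S. G u = g}. c u * \<alpha> (G u) ^ ex)"
        unfolding Gs_def by (rule sum.image_gen[OF finS])
      also have "\<dots> = (\<Sum>g\<in>Gs. \<gamma> g * \<alpha> g ^ ex)"
        unfolding \<gamma>_def by (intro sum.cong refl) (auto simp: sum_distrib_right intro!: sum.cong)
      finally show ?thesis .
    qed
    have \<gamma>in: "\<gamma> g \<in> Kset r" for g
      unfolding \<gamma>_def by (rule sum_in_closed) (auto simp: cin Kset_0 Kset_closed finS)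
    have finGs: "finite Gs" using finS by (simp add: Gs_def)
    have GsL: "Gs \<subseteq> {..<ell}" using Gu by (auto simp: Gs_def)
    have cGs: "card Gs \<le> card S" unfolding Gs_def using finS by (rule card_image_le)
    have van: "\<forall>ex<card Gs. (\<Sum>g\<in>Gs. \<gamma> g * \<alpha> g ^ ex) = 0"
    proof (intro allI impI)
      fix ex assume ex: "ex < card Gs"
      show "(\<Sum>g\<in>Gs. \<gamma> g * \<alpha> g ^ ex) = 0"
      proof (cases "ex = 0")
        case True
        then show ?thesis using regroup[of 0] Z0 by simp
      next
        case False
        have "2 \<le> card Gs" using ex False by simp
        also have "card Gs \<le> ell" using GsL card_mono[of "{..<ell}" Gs] by simp
        also have "ell \<le> 2^m" using ellm by (simp add: ell_def)
        finally have m0: "0 < m" by (cases m) auto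
        have exh: "ex < h" using ex cGs cS by simp
        obtain a e' where ae: "ex = e' * (2^r) ^ a" "\<not> 2^r dvd e'" "0 < e'"
        proof -
          have "2^1 \<le> (2::nat)^r" by (rule power_increasing) (use r0 in auto)
          hence q2: "2 \<le> (2::nat)^r" by simp
          show ?thesis using pow_decomp[OF q2, of ex] False that by auto
        qed
        have exe: "ex = e' * 2^(r*a)" using ae(1) by (simp add: power_mult)
        have "1 \<le> (2::nat)^(r*a)" by simp
        hence "e' * 1 \<le> e' * 2^(r*a)" by (rule mult_le_mono2)
        hence "e' \<le> ex" using exe by simp
        hence "e' < h" using exh by simp
        then obtain j where j: "j < w" "goodE j = e'" using good ae by blast
        have "(\<Sum>g\<in>Gs. \<gamma> g * \<alpha> g ^ e') = 0"
          using Zf0[OF m0 j(1)] regroup[of e'] j(2) by (simp add: Zf_def)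
        hence "(\<Sum>g\<in>Gs. \<gamma> g * \<alpha> g ^ e') ^ (2 ^ (r * a)) = 0" by simp
        moreover have "(\<Sum>g\<in>Gs. \<gamma> g * \<alpha> g ^ e') ^ (2 ^ (r * a)) = (\<Sum>g\<in>Gs. \<gamma> g * \<alpha> g ^ ex)"
        proof -
          have "(\<Sum>g\<in>Gs. \<gamma> g * \<alpha> g ^ e') ^ (2 ^ (r * a)) = (\<Sum>g\<in>Gs. (\<gamma> g * \<alpha> g ^ e') ^ (2 ^ (r * a)))"
            by (rule c2_frob_sum[OF c2C])
          also have "\<dots> = (\<Sum>g\<in>Gs. \<gamma> g * \<alpha> g ^ ex)"
          proof (rule sum.cong[OF refl])
            fix g
            have "\<gamma> g \<in> Kset (r * a)" using \<gamma>in Kset_sub[of r "r * a"] by auto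
            hence "\<gamma> g ^ (2 ^ (r * a)) = \<gamma> g" by (simp add: Kset_def)
            moreover have "(\<alpha> g ^ e') ^ (2 ^ (r * a)) = \<alpha> g ^ ex"
              unfolding exe by (simp only: power_mult)
            ultimately show "(\<gamma> g * \<alpha> g ^ e') ^ (2 ^ (r * a)) = \<gamma> g * \<alpha> g ^ ex"
              by (simp add: power_mult_distrib)
          qed
          finally show ?thesis .
        qed
        ultimately show ?thesis by simp
      qed
    qed
    have "inj_on \<alpha> Gs" by (rule inj_on_subset[OF \<alpha>inj]) (use GsL in \<open>simp add: ell_def\<close>)
    hence all0: "\<forall>g\<in>Gs. \<gamma> g = 0" using vandermonde[OF finGs _ le_refl van] by blast
    obtain g where g: "g \<in> Gs" using Sne by (auto simp: Gs_def)
    have "(\<Sum>u\<in>{u\<in>S. Gof k h r u = g}. Bp u + Bp (e g)) \<noteq> 0"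
      using gamma_ne[OF eh S ne] g by (simp add: Gs_def G_def)
    moreover have "(\<Sum>u\<in>{u\<in>S. Gof k h r u = g}. Bp u + Bp (e g)) = \<gamma> g"
      unfolding \<gamma>_def c_def G_def by (intro sum.cong refl) auto
    ultimately show False using all0 g by simp
  qed
qed
end


lemma m_props:
  assumes "0 < r"
  shows "r dvd m_param k r h \<and> num_groups k r h \<le> 2 ^ m_param k r h"
proof -
  define l where "l = num_groups k r h"
  have "l < 2 ^ l" by (rule less_exp)
  also have "2 ^ l \<le> (2::nat) ^ (r * l)" using assms by (intro power_increasing) auto
  finally have "r dvd (r * l) \<and> l \<le> 2 ^ (r * l)" by simp
  hence "\<exists>m. r dvd m \<and> l \<le> 2 ^ m" by blast
  thus ?thesis unfolding m_param_def l_def[symmetric] by (rule LeastI_ex)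
qed

lemma w_bound:
  assumes "0 < r" "0 < h"
  shows "card {e. 0 < e \<and> e < h \<and> \<not> 2^r dvd e} \<le> nat \<lceil>(real h - 1) * (1 - 1 / 2 ^ r)\<rceil>"
proof -
  define q :: nat where "q = 2^r"
  define n where "n = h - 1"
  define d where "d = n div q"
  have q2: "2 \<le> q" unfolding q_def using assms(1)
    by (metis One_nat_def Suc_leI power_increasing power_one_right one_le_numeral less_eq_nat.simps(1) not_less_eq_eq)
  define Good where "Good = {e. 0 < e \<and> e < h \<and> \<not> q dvd e}"
  define Mult where "Mult = {e. 0 < e \<and> e < h \<and> q dvd e}"
  have un: "Good \<union> Mult = {0<..<h}" by (auto simp: Good_def Mult_def)
  have dj: "Good \<inter> Mult = {}" by (auto simp: Good_def Mult_def)
  have fG: "finite Good" "finite Mult" by (auto simp: Good_def Mult_def)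
  have "card Good + card Mult = n" using card_Un_disjoint[OF fG dj] un by (simp add: n_def)
  moreover have "d \<le> card Mult"
  proof -
    have sub: "(\<lambda>j. q * j) ` {1..d} \<subseteq> Mult"
    proof
      fix x assume "x \<in> (\<lambda>j. q * j) ` {1..d}"
      then obtain j where j: "1 \<le> j" "j \<le> d" "x = q * j" by auto
      have "q * j \<le> q * d" using j by simp
      also have "q * d \<le> n" by (simp add: d_def)
      finally have "x < h" using j assms(2) by (simp add: n_def)
      moreover have "0 < x" using j q2 by simp
      ultimately show "x \<in> Mult" using j by (simp add: Mult_def)
    qed
    have "inj_on (\<lambda>j. q * j) {1..d}" using q2 by (auto simp: inj_on_def)
    hence "card ((\<lambda>j. q * j) ` {1..d}) = d" by (simp add: card_image)
    thus ?thesis using card_mono[OF fG(2) sub] by simp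
  qed
  ultimately have cG: "card Good \<le> n - d" by simp
  have nq: "n < q * (d + 1)"
  proof -
    have "n = q * d + n mod q" by (simp add: d_def)
    moreover have "n mod q < q" using q2 by simp
    ultimately show ?thesis by simp
  qed
  have "int (n - d) \<le> \<lceil>(real h - 1) * (1 - 1 / 2 ^ r)\<rceil>"
  proof (subst le_ceiling_iff)
    have dn: "d \<le> n" by (simp add: d_def)
    have rh: "real h - 1 = real n" using assms(2) by (simp add: n_def of_nat_diff)
    have qr: "(2::real) ^ r = real q" by (simp add: q_def)
    have "real n < real q * (real d + 1)" using nq by (metis of_nat_1 of_nat_add of_nat_less_iff of_nat_mult)
    hence "real n / real q < real d + 1" using q2 by (simp add: divide_less_eq mult.commute)
    hence "real n - real d - 1 < real n * (1 - 1 / real q)" by (simp add: algebra_simps)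
    thus "real_of_int (int (n - d)) - 1 < (real h - 1) * (1 - 1 / 2 ^ r)"
      using dn rh by (simp add: of_nat_diff q_def)
  qed
  hence "n - d \<le> nat \<lceil>(real h - 1) * (1 - 1 / 2 ^ r)\<rceil>" by linarith
  thus ?thesis using cG by (simp add: Good_def q_def)
qed


theorem theorem15:
  fixes k r h :: nat
  assumes "0 < k" "0 < r" "0 < h" "r dvd (k + h)"
    and "card (UNIV :: 'a::{field,finite} set) = 2 ^ t_param k r h"
  shows "\<exists>(P :: nat \<Rightarrow> nat \<Rightarrow> 'a::{field,finite}) grp. max_recoverable_local_code k r h P grp"
proof -
  note k0 = assms(1) and r0 = assms(2) and h0 = assms(3) and rd = assms(4) and cardA = assms(5)
  define t where "t = t_param k r h"
  define m where "m = m_param k r h"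
  define W where "W = nat \<lceil>(real h - 1) * (1 - 1 / 2 ^ r)\<rceil>"
  define ell where "ell = num_groups k r h"
  have tdef: "t = r + m * W" by (simp add: t_def m_def W_def t_param_def)
  have t0: "0 < t" using r0 tdef by simp
  have c2a: "(1::'a) + 1 = 0" using card_pow2_char2[OF cardA[folded t_def] t0] .
  have rm: "r dvd m" and ellm: "ell \<le> 2 ^ m" using m_props[OF r0] by (auto simp: m_def ell_def)
  obtain \<beta> :: "nat \<Rightarrow> C" where \<beta>: "\<forall>i<r. \<beta> i \<in> Kset r" "indep2 \<beta> {..<r}"
    using greedy_indep[OF c2C, of "Kset r" r] card_Kset[OF r0] by auto
  obtain \<kappa> :: "nat \<Rightarrow> C" where \<kappa>: "\<forall>i<m. \<kappa> i \<in> Kset m" "indep2 \<kappa> {..<m}"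
  proof (cases "0 < m")
    case True
    then show ?thesis using that greedy_indep[OF c2C, of "Kset m" m] card_Kset[OF True] by auto
  next
    case False
    hence "m = 0" by simp
    then show ?thesis using that[of "\<lambda>_. 0"] by (simp add: indep2_def)
  qed
  obtain \<alpha> :: "nat \<Rightarrow> C" where \<alpha>: "\<forall>g. \<alpha> g \<in> Kset m" "inj_on \<alpha> {..<ell}"
  proof (cases "0 < m")
    case True
    have fK: "finite (Kset m)" "card (Kset m) = 2^m" using card_Kset[OF True] by auto
    obtain T where T: "T \<subseteq> Kset m" "card T = ell" "finite T"
      using obtain_subset_with_card_n[of ell "Kset m"] fK ellm by auto
    obtain f where f: "bij_betw f {0..<card T} T" using ex_bij_betw_nat_finite[OF T(3)] by blast
    define \<alpha> where "\<alpha> g = (if g < ell then f g else 0)" for g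
    have "\<alpha> g \<in> Kset m" for g
    proof (cases "g < ell")
      case True
      hence "f g \<in> T" using f T(2) by (auto simp: bij_betw_def)
      thus ?thesis using True T(1) by (auto simp: \<alpha>_def)
    next
      case False then show ?thesis by (simp add: \<alpha>_def Kset_0)
    qed
    moreover have "inj_on \<alpha> {..<ell}"
    proof (rule inj_onI)
      fix x y assume xy: "x \<in> {..<ell}" "y \<in> {..<ell}" "\<alpha> x = \<alpha> y"
      hence "f x = f y" by (simp add: \<alpha>_def)
      moreover have "inj_on f {0..<card T}" using f by (simp add: bij_betw_def)
      ultimately show "x = y" using xy T(2) by (auto simp: inj_on_def)
    qed
    ultimately show ?thesis using that by blast
  next
    case False
    hence "ell \<le> 1" using ellm by simp
    hence "inj_on (\<lambda>_::nat. 0::C) {..<ell}" by (auto simp: inj_on_def)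
    moreover have "\<forall>g. (\<lambda>_::nat. 0::C) g \<in> Kset m" by (simp add: Kset_0)
    ultimately show ?thesis by (rule that[rotated])
  qed
  \<comment> \<open>enumeration of the non-redundant exponents\<close>
  define Good where "Good = {e. 0 < e \<and> e < h \<and> \<not> 2^r dvd e}"
  define w where "w = card Good"
  have fGood: "finite Good" by (simp add: Good_def)
  obtain goodE where gE: "bij_betw goodE {0..<w} Good"
    using ex_bij_betw_nat_finite[OF fGood] by (auto simp: w_def)
  have good: "\<forall>e. 0 < e \<and> e < h \<and> \<not> 2^r dvd e \<longrightarrow> (\<exists>j<w. goodE j = e)"
  proof (intro allI impI)
    fix e assume "0 < e \<and> e < h \<and> \<not> 2^r dvd e"
    hence "e \<in> Good" by (simp add: Good_def)
    hence "e \<in> goodE ` {0..<w}" using gE by (simp add: bij_betw_def)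
    thus "\<exists>j<w. goodE j = e" by auto
  qed
  have wW: "w \<le> W" unfolding w_def Good_def W_def by (rule w_bound[OF r0 h0])
  have "r + m * w \<le> t" using wW tdef by simp
  hence "2 ^ (r + m * w) \<le> card (UNIV :: 'a set)" using cardA t_def by (simp add: power_increasing)
  moreover have "finite (UNIV :: 'a set)" by simp
  ultimately obtain b :: "nat \<Rightarrow> 'a" where b: "indep2 b {..<r + m * w}"
    using greedy_indep[OF c2a, of UNIV "r + m * w"] by auto
  have loc: "constr k r h m w \<beta> \<kappa> \<alpha> b goodE"
    by (rule constr.intro[OF c2a r0 rd rm ellm[unfolded ell_def] \<beta>(1) \<beta>(2) \<kappa>(1) \<kappa>(2)
          \<alpha>(1) \<alpha>(2)[unfolded ell_def] b good])
  have "MUprop k r h (constr.mu k r h m w \<beta> \<kappa> \<alpha> b goodE)"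
    using constr.MU[OF loc] .
  from code_from_mu[OF c2a r0 rd k0 this] show ?thesis by blast
qed


end
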